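(* For every path $\omega\in\Omega$: $I_\textnormal{wCH}(\omega)\subseteq I_\textnormal{CH}(\omega)\subseteq I_\textnormal{C}(\omega)$, $I_\textnormal{wCH}(\omega)\subseteq I_\textnormal{S}(\omega)\subseteq I_\textnormal{C}(\omega)$, and $I_\textnormal{C}(\omega)\subseteq I_\textnormal{wML}(\omega)\subseteq I_\textnormal{ML}(\omega)$.
   Context: $\mathcal{X}=\{0,1\}$; $\Omega=\mathcal{X}^{\mathbb{N}}$ (paths); $\mathbb{S}=\bigcup_{n\ge0}\mathcal X^n$ (situations), $\square$ empty string, $|s|$ length, $\omega_{1:n}=(\omega_1,\dots,\omega_n)$, $\omega_{1:0}=\square$. $\mathcal I$: nonempty closed intervals $I\subseteq[0,1]$ (interval forecasts). For $f:\mathcal X\to\mathbb R$, $\overline E_I(f)=\max_{p\in I}[pf(1)+(1-p)f(0)]$. A test supermartingale for $I$ is $T:\mathbb S\to\mathbb R_{\ge0}$ with $T(\square)=1$ and $\overline E_I(T(s\,\cdot)-T(s))\le0$ for all $s$. Real maps on countable effectively encoded sets are computable if recursively approximable to within $2^{-n}$ by rationals, and lower semicomputable if they are limits of recursive non-decreasing rational sequences. A multiplier process $D$ maps situations to gambles and generates $D^{\circledcirc}(x_1,\dots,x_n)=\prod_{k=0}^{n-1}D(x_{1:k})(x_{k+1})$; it is lower semicomputable if $(s,x)\mapsto D(s)(x)$ is. For a path $\omega$ and $I\in\mathcal I$: ML-random if no lower semicomputable test supermartingale $T$ for $I$ has $\limsup_nT(\omega_{1:n})=\infty$; wML-random if no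 test supermartingale for $I$ of the form $D^{\circledcirc}$, $D$ lower semicomputable, has this; C-random if no computable test supermartingale for $I$ has this; S-random if there is no computable test supermartingale $T$ for $I$ with a computable non-decreasing unbounded $\tau:\mathbb N_0\to\mathbb R_{\ge0}$ satisfying $\limsup_n[T(\omega_{1:n})-\tau(n)]\ge0$; CH-random (resp. wCH-random) if for every recursive (resp. recursive temporal, i.e. depending only on $|s|$) $S:\mathbb S\to\{0,1\}$ with $\sum_{k=0}^{n-1}S(\omega_{1:k})\to\infty$, the relative frequencies $\frac{\sum_{k<n}S(\omega_{1:k})\omega_{k+1}}{\sum_{k<n}S(\omega_{1:k})}$ have liminf $\ge\min I$ and limsup $\le\max I$. $\mathcal I_\textnormal{R}(\omega)=\{I\in\mathcal I:\omega\text{ R-random for }I\}$, $I_\textnormal{R}(\omega)=\bigcap_{I\in\mathcal I_\textnormal{R}(\omega)}I$. *)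

theory Defs
  imports "HOL-Analysis.Analysis" "HOL-Library.Nat_Bijection"
begin

datatype recf = Zero | Succ | Proj nat | Comp recf "recf list" | Prim recf recf | Mu recf

inductive evalr :: "recf \<Rightarrow> nat list \<Rightarrow> nat \<Rightarrow> bool" where
  ev_zero: "evalr Zero xs 0"
| ev_succ: "evalr Succ (x # xs) (Suc x)"
| ev_proj: "i < length xs \<Longrightarrow> evalr (Proj i) xs (xs ! i)"
| ev_comp: "length ys = length gs \<Longrightarrow> (\<forall>i < length gs. evalr (gs ! i) xs (ys ! i))
            \<Longrightarrow> evalr f ys z \<Longrightarrow> evalr (Comp f gs) xs z"
| ev_prim0: "evalr f xs y \<Longrightarrow> evalr (Prim f g) (0 # xs) y"
| ev_primS: "evalr (Prim f g) (n # xs) y \<Longrightarrow> evalr g (y # n # xs) z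
            \<Longrightarrow> evalr (Prim f g) (Suc n # xs) z"
| ev_mu: "evalr f (n # xs) 0 \<Longrightarrow> (\<forall>m < n. \<exists>y. 0 < y \<and> evalr f (m # xs) y)
            \<Longrightarrow> evalr (Mu f) xs n"

definition recursive1 :: "(nat \<Rightarrow> nat) \<Rightarrow> bool" where
  "recursive1 f \<longleftrightarrow> (\<exists>c. \<forall>a. evalr c [a] (f a))"

definition recursive2 :: "(nat \<Rightarrow> nat \<Rightarrow> nat) \<Rightarrow> bool" where
  "recursive2 f \<longleftrightarrow> (\<exists>c. \<forall>a b. evalr c [a, b] (f a b))"

text \<open>Bijective binary encoding of situations (binary strings) by naturals.\<close>
fun enc_sit :: "bool list \<Rightarrow> nat" where
  "enc_sit [] = 0"
| "enc_sit (b # xs) = 2 * enc_sit xs + (if b then 2 else 1)"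

definition enc_sit_out :: "bool list \<times> bool \<Rightarrow> nat" where
  "enc_sit_out p = prod_encode (enc_sit (fst p), (if snd p then 1 else 0))"

text \<open>Decoding naturals to rationals (surjective onto the rationals).\<close>
definition rat_dec :: "nat \<Rightarrow> real" where
  "rat_dec n = (case prod_decode n of (a, b) \<Rightarrow> real_of_int (int_decode a) / real (Suc b))"

definition computable_real :: "('a \<Rightarrow> nat) \<Rightarrow> ('a \<Rightarrow> real) \<Rightarrow> bool" where
  "computable_real code f \<longleftrightarrow>
     (\<exists>q. recursive2 q \<and> (\<forall>a n. \<bar>f a - rat_dec (q (code a) n)\<bar> \<le> 1 / 2 ^ n))"

definition lower_semicomputable :: "('a \<Rightarrow> nat) \<Rightarrow> ('a \<Rightarrow> real) \<Rightarrow> bool" where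
  "lower_semicomputable code f \<longleftrightarrow>
     (\<exists>q. recursive2 q \<and> (\<forall>a. incseq (\<lambda>n. rat_dec (q (code a) n))
                           \<and> (\<lambda>n. rat_dec (q (code a) n)) \<longlonglongrightarrow> f a))"

definition recursive_sel :: "(bool list \<Rightarrow> bool) \<Rightarrow> bool" where
  "recursive_sel S \<longleftrightarrow> (\<exists>g. recursive1 g \<and> (\<forall>s. g (enc_sit s) = (if S s then 1 else 0)))"

definition temporal :: "(bool list \<Rightarrow> bool) \<Rightarrow> bool" where
  "temporal S \<longleftrightarrow> (\<forall>s t. length s = length t \<longrightarrow> S s = S t)"

text \<open>A path is \<omega> :: nat \<Rightarrow> bool, with \<omega> k standing for \<omega>_{k+1}; outcome 1 = True.\<close>
definition prefix :: "(nat \<Rightarrow> bool) \<Rightarrow> nat \<Rightarrow> bool list" where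
  "prefix \<omega> n = map \<omega> [0..<n]"

definition interval_forecasts :: "real set set" where
  "interval_forecasts = {I. \<exists>a b. 0 \<le> a \<and> a \<le> b \<and> b \<le> 1 \<and> I = {a..b}}"

definition upper_exp :: "real set \<Rightarrow> (bool \<Rightarrow> real) \<Rightarrow> real" where
  "upper_exp I f = Sup ((\<lambda>p. p * f True + (1 - p) * f False) ` I)"

definition test_supermartingale :: "real set \<Rightarrow> (bool list \<Rightarrow> real) \<Rightarrow> bool" where
  "test_supermartingale I T \<longleftrightarrow>
     T [] = 1 \<and> (\<forall>s. 0 \<le> T s) \<and> (\<forall>s. upper_exp I (\<lambda>x. T (s @ [x]) - T s) \<le> 0)"

definition mult_gen :: "(bool list \<Rightarrow> bool \<Rightarrow> real) \<Rightarrow> bool list \<Rightarrow> real" where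
  "mult_gen D xs = (\<Prod>k<length xs. D (take k xs) (xs ! k))"

definition MartinLoef_random :: "(nat \<Rightarrow> bool) \<Rightarrow> real set \<Rightarrow> bool" where
  "MartinLoef_random \<omega> I \<longleftrightarrow> \<not> (\<exists>T. test_supermartingale I T \<and> lower_semicomputable enc_sit T
       \<and> limsup (\<lambda>n. ereal (T (prefix \<omega> n))) = \<infinity>)"

definition weak_MartinLoef_random :: "(nat \<Rightarrow> bool) \<Rightarrow> real set \<Rightarrow> bool" where
  "weak_MartinLoef_random \<omega> I \<longleftrightarrow> \<not> (\<exists>D. test_supermartingale I (mult_gen D)
       \<and> lower_semicomputable enc_sit_out (\<lambda>(s, x). D s x)
       \<and> limsup (\<lambda>n. ereal (mult_gen D (prefix \<omega> n))) = \<infinity>)"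

definition C_random :: "(nat \<Rightarrow> bool) \<Rightarrow> real set \<Rightarrow> bool" where
  "C_random \<omega> I \<longleftrightarrow> \<not> (\<exists>T. test_supermartingale I T \<and> computable_real enc_sit T
       \<and> limsup (\<lambda>n. ereal (T (prefix \<omega> n))) = \<infinity>)"

definition S_random :: "(nat \<Rightarrow> bool) \<Rightarrow> real set \<Rightarrow> bool" where
  "S_random \<omega> I \<longleftrightarrow> \<not> (\<exists>T \<tau>. test_supermartingale I T \<and> computable_real enc_sit T
       \<and> computable_real id \<tau> \<and> (\<forall>n. 0 \<le> \<tau> n) \<and> mono \<tau> \<and> \<not> bdd_above (range \<tau>)
       \<and> limsup (\<lambda>n. ereal (T (prefix \<omega> n) - \<tau> n)) \<ge> 0)"

definition sel_count :: "(bool list \<Rightarrow> bool) \<Rightarrow> (nat \<Rightarrow> bool) \<Rightarrow> nat \<Rightarrow> real" where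
  "sel_count S \<omega> n = (\<Sum>k<n. of_bool (S (prefix \<omega> k)))"

definition rel_freq :: "(bool list \<Rightarrow> bool) \<Rightarrow> (nat \<Rightarrow> bool) \<Rightarrow> nat \<Rightarrow> real" where
  "rel_freq S \<omega> n = (\<Sum>k<n. of_bool (S (prefix \<omega> k)) * of_bool (\<omega> k)) / sel_count S \<omega> n"

definition freq_ok :: "(bool list \<Rightarrow> bool) \<Rightarrow> (nat \<Rightarrow> bool) \<Rightarrow> real set \<Rightarrow> bool" where
  "freq_ok S \<omega> I \<longleftrightarrow>
     (filterlim (sel_count S \<omega>) at_top sequentially \<longrightarrow>
       liminf (\<lambda>n. ereal (rel_freq S \<omega> n)) \<ge> ereal (Inf I)
       \<and> limsup (\<lambda>n. ereal (rel_freq S \<omega> n)) \<le> ereal (Sup I))"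

definition CH_random :: "(nat \<Rightarrow> bool) \<Rightarrow> real set \<Rightarrow> bool" where
  "CH_random \<omega> I \<longleftrightarrow> (\<forall>S. recursive_sel S \<longrightarrow> freq_ok S \<omega> I)"

definition wCH_random :: "(nat \<Rightarrow> bool) \<Rightarrow> real set \<Rightarrow> bool" where
  "wCH_random \<omega> I \<longleftrightarrow> (\<forall>S. recursive_sel S \<and> temporal S \<longrightarrow> freq_ok S \<omega> I)"

text \<open>I_R(\<omega>): intersection of all interval forecasts for which \<omega> is R-random.\<close>
definition I_of :: "((nat \<Rightarrow> bool) \<Rightarrow> real set \<Rightarrow> bool) \<Rightarrow> (nat \<Rightarrow> bool) \<Rightarrow> real set" where
  "I_of R \<omega> = \<Inter> {I \<in> interval_forecasts. R \<omega> I}"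

end

theory Submission
  imports Defs
begin

definition rfn :: "nat \<Rightarrow> (nat list \<Rightarrow> nat) \<Rightarrow> bool" where
  "rfn n f \<longleftrightarrow> (\<exists>c. \<forall>xs. length xs = n \<longrightarrow> evalr c xs (f xs))"

lemma rfn_zero: "rfn n (\<lambda>xs. 0)"
  unfolding rfn_def using ev_zero by blast

lemma rfn_proj: "i < n \<Longrightarrow> rfn n (\<lambda>xs. xs ! i)"
  unfolding rfn_def using ev_proj by metis

lemma rfn_succ1: "rfn 1 (\<lambda>xs. Suc (xs ! 0))"
  unfolding rfn_def
proof (intro exI allI impI)
  fix xs :: "nat list" assume "length xs = 1"
  then obtain x where "xs = [x]" by (metis One_nat_def length_0_conv length_Suc_conv)
  then show "evalr Succ xs (Suc (xs ! 0))" using ev_succ by simp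
qed

lemma list_choice:
  "(\<forall>h\<in>set hs. \<exists>c. P h c) \<Longrightarrow> \<exists>cs. length cs = length hs \<and> (\<forall>i<length hs. P (hs ! i) (cs ! i))"
proof (induction hs)
  case Nil then show ?case by auto
next
  case (Cons h hs)
  then obtain cs where cs: "length cs = length hs" "\<forall>i<length hs. P (hs ! i) (cs ! i)" by auto
  from Cons.prems obtain c where "P h c" by auto
  with cs show ?case
    by (intro exI[of _ "c # cs"]) (auto simp: less_Suc_eq_0_disj)
qed

lemma rfn_comp:
  assumes "rfn k g" "length hs = k" "\<forall>h\<in>set hs. rfn n h"
  shows "rfn n (\<lambda>xs. g (map (\<lambda>h. h xs) hs))"
proof -
  from assms(1) obtain cg where cg: "\<forall>xs. length xs = k \<longrightarrow> evalr cg xs (g xs)"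
    unfolding rfn_def by blast
  from assms(3) have "\<forall>h\<in>set hs. \<exists>c. \<forall>xs. length xs = n \<longrightarrow> evalr c xs (h xs)"
    unfolding rfn_def by blast
  from list_choice[OF this] obtain cs where cs: "length cs = length hs"
    "\<forall>i<length hs. \<forall>xs. length xs = n \<longrightarrow> evalr (cs ! i) xs ((hs ! i) xs)" by blast
  show ?thesis unfolding rfn_def
  proof (intro exI allI impI)
    fix xs :: "nat list" assume "length xs = n"
    show "evalr (Comp cg cs) xs (g (map (\<lambda>h. h xs) hs))"
      by (rule ev_comp[where ys = "map (\<lambda>h. h xs) hs"]) (use cs cg assms(2) \<open>length xs = n\<close> in auto)
  qed
qed

lemma rfn_comp1: "rfn 1 g \<Longrightarrow> rfn n h \<Longrightarrow> rfn n (\<lambda>xs. g [h xs])"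
  using rfn_comp[of 1 g "[h]" n] by simp

lemma rfn_comp2: "rfn 2 g \<Longrightarrow> rfn n h1 \<Longrightarrow> rfn n h2 \<Longrightarrow> rfn n (\<lambda>xs. g [h1 xs, h2 xs])"
  using rfn_comp[of 2 g "[h1, h2]" n] by simp

lemma rfn_comp3: "rfn 3 g \<Longrightarrow> rfn n h1 \<Longrightarrow> rfn n h2 \<Longrightarrow> rfn n h3 \<Longrightarrow> rfn n (\<lambda>xs. g [h1 xs, h2 xs, h3 xs])"
  using rfn_comp[of 3 g "[h1, h2, h3]" n] by (simp add: numeral_3_eq_3)

lemma rfn_Suc: "rfn n f \<Longrightarrow> rfn n (\<lambda>xs. Suc (f xs))"
  using rfn_comp1[OF rfn_succ1, of n f] by simp

lemma rfn_const: "rfn n (\<lambda>xs. c)"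
proof (induction c)
  case 0 then show ?case by (rule rfn_zero)
next
  case (Suc c) then show ?case using rfn_Suc[of n "\<lambda>xs. c"] by simp
qed

lemma rfn_prim:
  assumes "rfn n f" "rfn (Suc (Suc n)) g"
  shows "rfn (Suc n) (\<lambda>ys. rec_nat (f (tl ys)) (\<lambda>m y. g (y # m # tl ys)) (hd ys))"
proof -
  from assms obtain cf cg where cf: "\<forall>xs. length xs = n \<longrightarrow> evalr cf xs (f xs)"
    and cg: "\<forall>xs. length xs = Suc (Suc n) \<longrightarrow> evalr cg xs (g xs)"
    unfolding rfn_def by blast
  have *: "evalr (Prim cf cg) (m # xs) (rec_nat (f xs) (\<lambda>m y. g (y # m # xs)) m)"
    if "length xs = n" for m xs
  proof (induction m)
    case 0 then show ?case using cf that by (simp add: ev_prim0)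
  next
    case (Suc m)
    have "evalr cg (rec_nat (f xs) (\<lambda>m y. g (y # m # xs)) m # m # xs)
            (g (rec_nat (f xs) (\<lambda>m y. g (y # m # xs)) m # m # xs))"
      using cg that by simp
    from ev_primS[OF Suc.IH this] show ?case by simp
  qed
  show ?thesis unfolding rfn_def
  proof (intro exI allI impI)
    fix ys :: "nat list" assume "length ys = Suc n"
    then obtain m xs where "ys = m # xs" "length xs = n" by (cases ys) auto
    then show "evalr (Prim cf cg) ys (rec_nat (f (tl ys)) (\<lambda>m y. g (y # m # tl ys)) (hd ys))"
      using * by simp
  qed
qed

lemma rfn_mu:
  assumes "rfn (Suc n) f" "\<And>xs. length xs = n \<Longrightarrow> \<exists>m. f (m # xs) = 0"
  shows "rfn n (\<lambda>xs. LEAST m. f (m # xs) = 0)"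
proof -
  from assms obtain cf where cf: "\<forall>xs. length xs = Suc n \<longrightarrow> evalr cf xs (f xs)"
    unfolding rfn_def by blast
  show ?thesis unfolding rfn_def
  proof (intro exI allI impI)
    fix xs :: "nat list" assume l: "length xs = n"
    define m where "m = (LEAST m. f (m # xs) = 0)"
    obtain k where k: "f (k # xs) = 0" using assms(2)[OF l] by blast
    have m0: "f (m # xs) = 0" unfolding m_def using k by (rule LeastI)
    have "\<forall>k<m. \<exists>y. 0 < y \<and> evalr cf (k # xs) y"
    proof (intro allI impI)
      fix k assume "k < m"
      then have "f (k # xs) \<noteq> 0" unfolding m_def by (rule not_less_Least)
      moreover have "evalr cf (k # xs) (f (k # xs))" using cf l by simp
      ultimately show "\<exists>y. 0 < y \<and> evalr cf (k # xs) y" by blast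
    qed
    moreover have "evalr cf (m # xs) 0" using cf l m0 by (metis length_Cons)
    ultimately have "evalr (Mu cf) xs m" by (intro ev_mu)
    then show "evalr (Mu cf) xs (LEAST m. f (m # xs) = 0)" unfolding m_def .
  qed
qed


lemma rfn_cong: "rfn n f \<Longrightarrow> (\<And>xs. length xs = n \<Longrightarrow> f xs = g xs) \<Longrightarrow> rfn n g"
  unfolding rfn_def by metis

lemma map_nth_upt_eq: "length xs = n \<Longrightarrow> map (\<lambda>h. h xs) (map (\<lambda>i xs. xs ! i) [0..<n]) = xs"
  by (simp add: comp_def) (metis map_nth)

lemma rfn_rec:
  assumes "rfn n f" "rfn (Suc (Suc n)) (\<lambda>ys. g (ys ! 1) (ys ! 0) (drop 2 ys))" "rfn n k"
  shows "rfn n (\<lambda>xs. rec_nat (f xs) (\<lambda>m y. g m y xs) (k xs))"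
proof -
  have P: "rfn (Suc n) (\<lambda>ys. rec_nat (f (tl ys)) (\<lambda>m y. (\<lambda>ys. g (ys ! 1) (ys ! 0) (drop 2 ys)) (y # m # tl ys)) (hd ys))"
    by (rule rfn_prim[OF assms(1,2)])
  have "rfn n (\<lambda>xs. (\<lambda>ys. rec_nat (f (tl ys)) (\<lambda>m y. g m y (tl ys)) (hd ys))
                (map (\<lambda>h. h xs) (k # map (\<lambda>i xs. xs ! i) [0..<n])))"
    by (rule rfn_comp[of "Suc n"]) (use P assms(3) rfn_proj in auto)
  then show ?thesis
    by (rule rfn_cong) (simp only: list.map map_nth_upt_eq list.sel)
qed

definition rpred :: "nat \<Rightarrow> (nat list \<Rightarrow> bool) \<Rightarrow> bool" where
  "rpred n P \<longleftrightarrow> rfn n (\<lambda>xs. if P xs then 1 else 0)"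

lemma rfn_mu':
  assumes "rpred (Suc n) (\<lambda>ys. P (ys ! 0) (drop 1 ys))" "\<And>xs. length xs = n \<Longrightarrow> \<exists>m. P m xs"
  shows "rfn n (\<lambda>xs. LEAST m. P m xs)"
proof -
  have "rfn (Suc n) (\<lambda>ys. 1 - (if P (ys ! 0) (drop 1 ys) then 1 else 0))"
  proof -
    have "rfn (Suc n) (\<lambda>ys. rec_nat ((\<lambda>xs. 1) ys) (\<lambda>m y. (\<lambda>zs. 0) (y # m # ys)) ((\<lambda>xs. if P (xs ! 0) (drop 1 xs) then 1 else 0) ys))"
      using rfn_rec[of "Suc n" "\<lambda>xs. 1" "\<lambda>m y xs. 0" "\<lambda>xs. if P (xs ! 0) (drop 1 xs) then 1 else 0"]
        assms(1) rfn_const unfolding rpred_def by simp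
    then show ?thesis by (rule rfn_cong) simp
  qed
  from rfn_mu[OF this] have "rfn n (\<lambda>xs. LEAST m. (1::nat) - (if P m xs then 1 else 0) = 0)"
    using assms(2) by simp
  then show ?thesis by (rule rfn_cong) (simp split: if_splits)
qed

lemma rfn_proj' [intro]: "i < n \<Longrightarrow> rfn n (\<lambda>xs. xs ! i)"
  by (rule rfn_proj)

lemma rfn_proj_drop [intro]: "k + i < n \<Longrightarrow> rfn n (\<lambda>xs. drop k xs ! i)"
proof -
  assume "k + i < n"
  then have "rfn n (\<lambda>xs. xs ! (k + i))" by (rule rfn_proj)
  then show ?thesis by (rule rfn_cong) (use \<open>k + i < n\<close> in simp)
qed

lemma rfn_proj_drop2 [intro]: "j + k + i < n \<Longrightarrow> rfn n (\<lambda>xs. drop k (drop j xs) ! i)"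
proof -
  assume "j + k + i < n"
  then have "rfn n (\<lambda>xs. xs ! (j + k + i))" by (rule rfn_proj)
  then show ?thesis by (rule rfn_cong) (use \<open>j + k + i < n\<close> in \<open>simp add: ac_simps\<close>)
qed

lemma rfn_add2: "rfn 2 (\<lambda>ys. ys ! 0 + ys ! 1)"
proof -
  have "rfn 2 (\<lambda>xs. rec_nat (xs ! 1) (\<lambda>m y. Suc y) (xs ! 0))"
    by (rule rfn_rec; (intro rfn_proj rfn_Suc)?; simp)
  moreover have "rec_nat b (\<lambda>m y. Suc y) a = a + b" for a b :: nat by (induct a) auto
  ultimately show ?thesis by (rule_tac rfn_cong) auto
qed

lemma rfn_add [intro]: "rfn n f \<Longrightarrow> rfn n g \<Longrightarrow> rfn n (\<lambda>xs. f xs + g xs)"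
  using rfn_comp2[OF rfn_add2] by simp

lemma rfn_mult2: "rfn 2 (\<lambda>ys. ys ! 0 * ys ! 1)"
proof -
  have "rfn 2 (\<lambda>xs. rec_nat 0 (\<lambda>m y. y + xs ! 1) (xs ! 0))"
    by (rule rfn_rec; (intro rfn_proj rfn_add rfn_const rfn_proj_drop)?; simp)
  moreover have "rec_nat 0 (\<lambda>m y. y + b) a = a * b" for a b :: nat by (induct a) auto
  ultimately show ?thesis by (rule_tac rfn_cong) auto
qed

lemma rfn_mult [intro]: "rfn n f \<Longrightarrow> rfn n g \<Longrightarrow> rfn n (\<lambda>xs. f xs * g xs)"
  using rfn_comp2[OF rfn_mult2] by simp

lemma rfn_pred1: "rfn 1 (\<lambda>ys. ys ! 0 - 1)"
proof -
  have "rfn 1 (\<lambda>xs. rec_nat 0 (\<lambda>m y. m) (xs ! 0))"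
    by (rule rfn_rec; (intro rfn_proj rfn_const)?; simp)
  moreover have "rec_nat 0 (\<lambda>m y. m) a = a - 1" for a :: nat by (induct a) auto
  ultimately show ?thesis by (rule_tac rfn_cong) auto
qed

lemma rfn_minus2: "rfn 2 (\<lambda>ys. ys ! 0 - ys ! 1)"
proof -
  have p: "rfn (Suc (Suc 2)) (\<lambda>ys. ys ! 0 - 1)" using rfn_comp1[OF rfn_pred1, of "Suc (Suc 2)" "\<lambda>ys. ys ! 0"] rfn_proj by simp
  have "rfn 2 (\<lambda>xs. rec_nat (xs ! 0) (\<lambda>m y. y - 1) (xs ! 1))"
    by (rule rfn_rec; (intro rfn_proj p)?; simp)
  moreover have "rec_nat a (\<lambda>m y. y - 1) b = a - b" for a b :: nat by (induct b) auto
  ultimately show ?thesis by (rule_tac rfn_cong) auto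
qed

lemma rfn_minus [intro]: "rfn n f \<Longrightarrow> rfn n g \<Longrightarrow> rfn n (\<lambda>xs. f xs - g xs)"
  using rfn_comp2[OF rfn_minus2] by simp

lemma rfn_const' [intro]: "rfn n (\<lambda>xs. c)" by (rule rfn_const)
lemma rfn_Suc' [intro]: "rfn n f \<Longrightarrow> rfn n (\<lambda>xs. Suc (f xs))" by (rule rfn_Suc)

lemma rpred_if [intro]:
  assumes "rpred n P" "rfn n f" "rfn n g"
  shows "rfn n (\<lambda>xs. if P xs then f xs else g xs)"
proof -
  have "rfn n (\<lambda>xs. (if P xs then 1 else 0) * f xs + (1 - (if P xs then 1 else 0)) * g xs)"
    using assms unfolding rpred_def by (intro rfn_add rfn_mult rfn_minus rfn_const')
  then show ?thesis by (rule rfn_cong) simp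
qed

lemma rpred_le [intro]: "rfn n f \<Longrightarrow> rfn n g \<Longrightarrow> rpred n (\<lambda>xs. f xs \<le> g xs)"
  unfolding rpred_def
proof -
  assume "rfn n f" "rfn n g"
  then have "rfn n (\<lambda>xs. 1 - (f xs - g xs))" by (intro rfn_minus rfn_const')
  then show "rfn n (\<lambda>xs. if f xs \<le> g xs then 1 else 0)" by (rule rfn_cong) simp
qed

lemma rpred_lt [intro]: "rfn n f \<Longrightarrow> rfn n g \<Longrightarrow> rpred n (\<lambda>xs. f xs < g xs)"
proof -
  assume "rfn n f" "rfn n g"
  then have "rpred n (\<lambda>xs. Suc (f xs) \<le> g xs)" by (intro rpred_le rfn_Suc')
  then show ?thesis unfolding rpred_def by (rule rfn_cong) (simp add: Suc_le_eq)
qed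

lemma rpred_eq [intro]: "rfn n f \<Longrightarrow> rfn n g \<Longrightarrow> rpred n (\<lambda>xs. f xs = g xs)"
proof -
  assume "rfn n f" "rfn n g"
  then have "rfn n (\<lambda>xs. 1 - ((f xs - g xs) + (g xs - f xs)))" by (intro rfn_minus rfn_add rfn_const')
  then show ?thesis unfolding rpred_def by (rule rfn_cong) auto
qed

lemma rpred_not [intro]: "rpred n P \<Longrightarrow> rpred n (\<lambda>xs. \<not> P xs)"
  unfolding rpred_def
proof -
  assume "rfn n (\<lambda>xs. if P xs then 1 else 0)"
  then have "rfn n (\<lambda>xs. 1 - (if P xs then 1 else 0))" by (intro rfn_minus rfn_const')
  then show "rfn n (\<lambda>xs. if \<not> P xs then 1 else 0)" by (rule rfn_cong) simp
qed

lemma rpred_conj [intro]: "rpred n P \<Longrightarrow> rpred n Q \<Longrightarrow> rpred n (\<lambda>xs. P xs \<and> Q xs)"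
  unfolding rpred_def
proof -
  assume "rfn n (\<lambda>xs. if P xs then 1 else 0)" "rfn n (\<lambda>xs. if Q xs then 1 else 0)"
  then have "rfn n (\<lambda>xs. (if P xs then 1 else 0) * (if Q xs then 1 else 0))" by (intro rfn_mult)
  then show "rfn n (\<lambda>xs. if P xs \<and> Q xs then 1 else 0)" by (rule rfn_cong) simp
qed

lemma rpred_disj [intro]: "rpred n P \<Longrightarrow> rpred n Q \<Longrightarrow> rpred n (\<lambda>xs. P xs \<or> Q xs)"
proof -
  assume "rpred n P" "rpred n Q"
  then have "rpred n (\<lambda>xs. \<not> (\<not> P xs \<and> \<not> Q xs))" by (intro rpred_not rpred_conj)
  then show ?thesis by simp
qed

lemma rfn_div2: "rfn 2 (\<lambda>ys. ys ! 0 div ys ! 1)"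
proof -
  have "rfn 2 (\<lambda>xs. LEAST q. xs ! 1 = 0 \<or> xs ! 0 < Suc q * xs ! 1)"
  proof (rule rfn_mu'[where P = "\<lambda>q xs. xs ! 1 = 0 \<or> xs ! 0 < Suc q * xs ! 1"])
    show "rpred (Suc 2) (\<lambda>ys. drop 1 ys ! 1 = 0 \<or> drop 1 ys ! 0 < Suc (ys ! 0) * drop 1 ys ! 1)"
      by (intro rpred_disj rpred_eq rpred_lt rfn_mult rfn_Suc' rfn_proj' rfn_proj_drop rfn_const'; simp)
    fix xs :: "nat list"
    show "\<exists>m. xs ! 1 = 0 \<or> xs ! 0 < Suc m * xs ! 1"
      by (rule exI[of _ "xs ! 0"]) (cases "xs ! 1", auto)
  qed
  then show ?thesis
  proof (rule rfn_cong)
    fix xs :: "nat list"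
    show "(LEAST q. xs ! 1 = 0 \<or> xs ! 0 < Suc q * xs ! 1) = xs ! 0 div xs ! 1"
    proof (cases "xs ! 1 = 0")
      case True then show ?thesis by simp
    next
      case False
      show ?thesis
      proof (rule Least_equality)
        show "xs ! 1 = 0 \<or> xs ! 0 < Suc (xs ! 0 div xs ! 1) * xs ! 1"
          using False div_less_iff_less_mult by blast
        fix q assume "xs ! 1 = 0 \<or> xs ! 0 < Suc q * xs ! 1"
        then have "xs ! 0 < Suc q * xs ! 1" using False by simp
        then have "xs ! 0 div xs ! 1 < Suc q" by (simp add: less_mult_imp_div_less)
        then show "xs ! 0 div xs ! 1 \<le> q" by simp
      qed
    qed
  qed
qed

lemma rfn_div [intro]: "rfn n f \<Longrightarrow> rfn n g \<Longrightarrow> rfn n (\<lambda>xs. f xs div g xs)"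
  using rfn_comp2[OF rfn_div2] by simp

lemma rfn_mod [intro]: "rfn n f \<Longrightarrow> rfn n g \<Longrightarrow> rfn n (\<lambda>xs. f xs mod g xs)"
proof -
  assume "rfn n f" "rfn n g"
  then have "rfn n (\<lambda>xs. f xs - g xs * (f xs div g xs))" by (intro rfn_minus rfn_mult rfn_div)
  then show ?thesis by (rule rfn_cong) (simp add: minus_mult_div_eq_mod)
qed

lemma rpred_even [intro]: "rfn n f \<Longrightarrow> rpred n (\<lambda>xs. even (f xs))"
proof -
  assume "rfn n f"
  then have "rpred n (\<lambda>xs. f xs mod 2 = 0)" by (intro rpred_eq rfn_mod rfn_const')
  then show ?thesis by (simp add: even_iff_mod_2_eq_zero)
qed

lemma rfn_pow2: "rfn 2 (\<lambda>ys. ys ! 0 ^ ys ! 1)"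
proof -
  have "rfn 2 (\<lambda>xs. rec_nat 1 (\<lambda>m y. y * xs ! 0) (xs ! 1))"
    by (rule rfn_rec; (intro rfn_proj rfn_mult rfn_const rfn_proj_drop)?; simp)
  moreover have "rec_nat 1 (\<lambda>m y. y * a) b = a ^ b" for a b :: nat by (induct b) auto
  ultimately show ?thesis by (rule_tac rfn_cong) auto
qed

lemma rfn_pow [intro]: "rfn n f \<Longrightarrow> rfn n g \<Longrightarrow> rfn n (\<lambda>xs. f xs ^ g xs)"
  using rfn_comp2[OF rfn_pow2] by simp

lemma rfn_prod_encode [intro]: "rfn n f \<Longrightarrow> rfn n g \<Longrightarrow> rfn n (\<lambda>xs. prod_encode (f xs, g xs))"
proof -
  assume "rfn n f" "rfn n g"
  then have "rfn n (\<lambda>xs. (f xs + g xs) * Suc (f xs + g xs) div 2 + f xs)" by (intro rfn_add rfn_mult rfn_div rfn_Suc' rfn_const')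
  then show ?thesis by (rule rfn_cong) (simp add: prod_encode_def triangle_def)
qed

definition pdw :: "nat \<Rightarrow> nat" where
  "pdw n = (LEAST w. n < triangle (Suc w))"

lemma triangle_ge: "n \<le> triangle n"
  by (induct n) auto

lemma pdw_props: "triangle (pdw n) \<le> n \<and> n < triangle (Suc (pdw n))"
proof -
  have ex: "n < triangle (Suc n)" using triangle_ge[of "Suc n"] by simp
  have 1: "n < triangle (Suc (pdw n))" unfolding pdw_def using ex by (rule LeastI)
  have "triangle (pdw n) \<le> n"
  proof (cases "pdw n")
    case 0 then show ?thesis by simp
  next
    case (Suc w)
    then have "w < pdw n" by simp
    then have "\<not> n < triangle (Suc w)" unfolding pdw_def by (rule not_less_Least)
    then show ?thesis using Suc by simp
  qed
  with 1 show ?thesis by simp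
qed

lemma prod_decode_pdw: "prod_decode n = (n - triangle (pdw n), pdw n - (n - triangle (pdw n)))"
proof -
  define w where "w = pdw n"
  define m where "m = n - triangle w"
  have p: "triangle w \<le> n" "n < triangle (Suc w)" using pdw_props[of n] unfolding w_def by auto
  then have n: "n = triangle w + m" and mw: "m \<le> w" unfolding m_def by auto
  have "prod_decode n = prod_decode_aux w m" using n prod_decode_triangle_add by simp
  also have "\<dots> = (m, w - m)" using mw by (simp add: prod_decode_aux.simps)
  finally show ?thesis unfolding m_def w_def .
qed

lemma rfn_triangle [intro]: "rfn n f \<Longrightarrow> rfn n (\<lambda>xs. triangle (f xs))"
proof -
  assume "rfn n f"
  then have "rfn n (\<lambda>xs. f xs * Suc (f xs) div 2)" by (intro rfn_div rfn_mult rfn_Suc' rfn_const')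
  then show ?thesis by (rule rfn_cong) (simp add: triangle_def)
qed

lemma rfn_pdw1: "rfn 1 (\<lambda>xs. pdw (xs ! 0))"
proof -
  have "rfn 1 (\<lambda>xs. LEAST w. xs ! 0 < triangle (Suc w))"
  proof (rule rfn_mu'[where P = "\<lambda>w xs. xs ! 0 < triangle (Suc w)"])
    show "rpred (Suc 1) (\<lambda>ys. drop 1 ys ! 0 < triangle (Suc (ys ! 0)))"
      by (intro rpred_lt rfn_triangle rfn_Suc' rfn_proj' rfn_proj_drop; simp)
    fix xs :: "nat list"
    show "\<exists>m. xs ! 0 < triangle (Suc m)"
      by (rule exI[of _ "xs ! 0"]) (use triangle_ge[of "Suc (xs ! 0)"] in simp)
  qed
  then show ?thesis by (rule rfn_cong) (simp add: pdw_def)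
qed

lemma rfn_pdw [intro]: "rfn n f \<Longrightarrow> rfn n (\<lambda>xs. pdw (f xs))"
  using rfn_comp1[OF rfn_pdw1] by simp

lemma rfn_fst_pd [intro]: "rfn n f \<Longrightarrow> rfn n (\<lambda>xs. fst (prod_decode (f xs)))"
proof -
  assume "rfn n f"
  then have "rfn n (\<lambda>xs. f xs - triangle (pdw (f xs)))" by (intro rfn_minus rfn_triangle rfn_pdw)
  then show ?thesis by (rule rfn_cong) (simp add: prod_decode_pdw)
qed

lemma rfn_snd_pd [intro]: "rfn n f \<Longrightarrow> rfn n (\<lambda>xs. snd (prod_decode (f xs)))"
proof -
  assume "rfn n f"
  then have "rfn n (\<lambda>xs. pdw (f xs) - (f xs - triangle (pdw (f xs))))" by (intro rfn_minus rfn_triangle rfn_pdw)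
  then show ?thesis by (rule rfn_cong) (simp add: prod_decode_pdw)
qed

definition shc :: "nat \<Rightarrow> nat \<Rightarrow> nat" where
  "shc k n = ((\<lambda>n. (n - 1) div 2) ^^ k) n"

lemma shc_0 [simp]: "shc 0 n = n" and shc_Suc: "shc (Suc k) n = (shc k n - 1) div 2"
  by (simp_all add: shc_def)

lemma rfn_shc2: "rfn 2 (\<lambda>xs. shc (xs ! 0) (xs ! 1))"
proof -
  have "rfn 2 (\<lambda>xs. rec_nat (xs ! 1) (\<lambda>m y. (y - 1) div 2) (xs ! 0))"
    by (rule rfn_rec; (intro rfn_div rfn_minus rfn_proj' rfn_const')?; simp)
  moreover have "rec_nat b (\<lambda>m y. (y - 1) div 2) a = shc a b" for a b
    by (induct a) (auto simp: shc_Suc)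
  ultimately show ?thesis by (rule_tac rfn_cong) auto
qed

lemma rfn_shc [intro]: "rfn n f \<Longrightarrow> rfn n g \<Longrightarrow> rfn n (\<lambda>xs. shc (f xs) (g xs))"
  using rfn_comp2[OF rfn_shc2] by simp

lemma shc_le: "shc k n \<le> n - k"
  by (induct k) (auto simp: shc_Suc)

definition lenc :: "nat \<Rightarrow> nat" where
  "lenc n = (LEAST k. shc k n = 0)"

lemma rfn_lenc1: "rfn 1 (\<lambda>xs. lenc (xs ! 0))"
proof -
  have "rfn 1 (\<lambda>xs. LEAST k. shc k (xs ! 0) = 0)"
  proof (rule rfn_mu'[where P = "\<lambda>k xs. shc k (xs ! 0) = 0"])
    show "rpred (Suc 1) (\<lambda>ys. shc (ys ! 0) (drop 1 ys ! 0) = 0)"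
      by (intro rpred_eq rfn_shc rfn_proj' rfn_proj_drop rfn_const'; simp)
    fix xs :: "nat list"
    show "\<exists>k. shc k (xs ! 0) = 0" using shc_le[of "xs ! 0" "xs ! 0"] by auto
  qed
  then show ?thesis by (rule rfn_cong) (simp add: lenc_def)
qed

lemma rfn_lenc [intro]: "rfn n f \<Longrightarrow> rfn n (\<lambda>xs. lenc (f xs))"
  using rfn_comp1[OF rfn_lenc1] by simp

lemma enc_sit_append: "enc_sit (xs @ ys) = enc_sit xs + 2 ^ length xs * enc_sit ys"
  by (induct xs) auto

lemma enc_sit_0_iff: "enc_sit s = 0 \<longleftrightarrow> s = []"
  by (cases s) auto

lemma shc_enc: "shc k (enc_sit s) = enc_sit (drop k s)"
proof (induct k arbitrary: s)
  case 0 then show ?case by simp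
next
  case (Suc k)
  have "shc (Suc k) (enc_sit s) = shc k (enc_sit (drop 1 s))"
  proof -
    have "shc (Suc k) n = shc k ((n - 1) div 2)" for n
      unfolding shc_def by (simp add: funpow_Suc_right del: funpow.simps)
    moreover have "(enc_sit s - 1) div 2 = enc_sit (drop 1 s)" by (cases s) auto
    ultimately show ?thesis by simp
  qed
  also have "\<dots> = enc_sit (drop (Suc k) s)" using Suc by simp
  finally show ?case .
qed

lemma lenc_enc: "lenc (enc_sit s) = length s"
  unfolding lenc_def
proof (rule Least_equality)
  show "shc (length s) (enc_sit s) = 0" by (simp add: shc_enc)
  fix k assume "shc k (enc_sit s) = 0"
  then show "length s \<le> k" by (simp add: shc_enc enc_sit_0_iff)
qed

lemma nth_enc: "k < length s \<Longrightarrow> (s ! k) = even (shc k (enc_sit s))"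
proof -
  assume "k < length s"
  then have "drop k s = s ! k # drop (Suc k) s" by (simp add: Cons_nth_drop_Suc)
  then show ?thesis by (simp add: shc_enc)
qed

lemma take_enc: "enc_sit (take k s) = enc_sit s - 2 ^ k * shc k (enc_sit s)"
proof (cases "k \<le> length s")
  case True
  have eq: "enc_sit s = enc_sit (take k s) + 2 ^ k * enc_sit (drop k s)"
    using enc_sit_append[of "take k s" "drop k s"] True by simp
  show ?thesis unfolding shc_enc using eq by linarith
next
  case False
  then have "take k s = s" "drop k s = []" by auto
  then show ?thesis by (simp add: shc_enc)
qed

lemma snoc_enc: "enc_sit (s @ [x]) = enc_sit s + 2 ^ length s * (if x then 2 else 1)"
  by (simp add: enc_sit_append)

lemma replicate_enc': "enc_sit (replicate k False) + 1 = 2 ^ k"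
  by (induct k) auto

lemma replicate_enc: "enc_sit (replicate k False) = 2 ^ k - 1"
  using replicate_enc'[of k] by simp

lemma recursive1_rfn: "recursive1 g \<Longrightarrow> rfn 1 (\<lambda>xs. g (xs ! 0))"
  unfolding recursive1_def rfn_def
proof (elim exE, intro exI allI impI)
  fix c and xs :: "nat list" assume "\<forall>a. evalr c [a] (g a)" "length xs = 1"
  then show "evalr c xs (g (xs ! 0))"
    by (metis One_nat_def length_0_conv length_Suc_conv nth_Cons_0)
qed

lemma recursive2_rfn: "recursive2 g \<Longrightarrow> rfn 2 (\<lambda>xs. g (xs ! 0) (xs ! 1))"
  unfolding recursive2_def rfn_def
proof (elim exE, intro exI allI impI)
  fix c and xs :: "nat list" assume "\<forall>a b. evalr c [a, b] (g a b)" "length xs = 2"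
  moreover from \<open>length xs = 2\<close> obtain a b where "xs = [a, b]"
    by (metis (no_types, lifting) One_nat_def Suc_1 length_0_conv length_Suc_conv)
  ultimately show "evalr c xs (g (xs ! 0) (xs ! 1))" by simp
qed

lemma rfn_recursive2: "rfn 2 (\<lambda>xs. g (xs ! 0) (xs ! 1)) \<Longrightarrow> recursive2 g"
  unfolding recursive2_def rfn_def
proof (elim exE, intro exI allI)
  fix c a b assume "\<forall>xs. length xs = 2 \<longrightarrow> evalr c xs (g (xs ! 0) (xs ! 1))"
  then show "evalr c [a, b] (g a b)" by (metis length_Cons list.size(3) nth_Cons_0 nth_Cons_Suc numeral_2_eq_2 One_nat_def)
qed

lemma rfn_app1: "recursive1 g \<Longrightarrow> rfn n f \<Longrightarrow> rfn n (\<lambda>xs. g (f xs))"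
  using rfn_comp1[OF recursive1_rfn] by simp

lemma rfn_app2: "recursive2 g \<Longrightarrow> rfn n f1 \<Longrightarrow> rfn n f2 \<Longrightarrow> rfn n (\<lambda>xs. g (f1 xs) (f2 xs))"
  using rfn_comp2[OF recursive2_rfn] by simp

lemma rat_dec_code: "0 < d \<Longrightarrow> rat_dec (prod_encode (2 * p, d - 1)) = real p / real d"
  by (simp add: rat_dec_def int_decode_def sum_decode_def)

lemma rat_dec_eq: "rat_dec r = (let a = fst (prod_decode r); b = snd (prod_decode r) in
   (if even a then real (a div 2) else - real (a div 2) - 1) / real (Suc b))"
  by (simp add: rat_dec_def int_decode_def sum_decode_def split: prod.splits)

lemma limsup_infty_iff:
  "limsup (\<lambda>n. ereal (f n)) = \<infinity> \<longleftrightarrow> (\<forall>B. frequently (\<lambda>n. B < f n) sequentially)"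
proof
  assume L: "limsup (\<lambda>n. ereal (f n)) = \<infinity>"
  show "\<forall>B. frequently (\<lambda>n. B < f n) sequentially"
  proof (rule allI, rule ccontr)
    fix B assume "\<not> frequently (\<lambda>n. B < f n) sequentially"
    then have "eventually (\<lambda>n. \<not> B < f n) sequentially" by (simp only: not_frequently)
    then have "eventually (\<lambda>n. ereal (f n) \<le> ereal B) sequentially"
      by (rule eventually_mono) simp
    then have "limsup (\<lambda>n. ereal (f n)) \<le> ereal B" by (rule Limsup_bounded)
    with L show False by simp
  qed
next
  assume F: "\<forall>B. frequently (\<lambda>n. B < f n) sequentially"
  show "limsup (\<lambda>n. ereal (f n)) = \<infinity>"
  proof (rule ccontr)
    assume "limsup (\<lambda>n. ereal (f n)) \<noteq> \<infinity>"
    then obtain k :: nat where "limsup (\<lambda>n. ereal (f n)) < ereal (real k)"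
      by (subst (asm) less_PInf_Ex_of_nat) (erule exE)
    then have ev: "eventually (\<lambda>n. ereal (f n) < ereal (real k)) sequentially" by (rule Limsup_lessD)
    have fr: "frequently (\<lambda>n. real k < f n) sequentially" using F by (rule spec)
    have "frequently (\<lambda>n. real k < f n \<and> ereal (f n) < ereal (real k)) sequentially"
      by (rule frequently_eventually_frequently[OF fr ev])
    then have "frequently (\<lambda>n. False) sequentially" by (rule frequently_elim1) auto
    then show False by simp
  qed
qed

lemma I_of_mono:
  assumes "\<And>I. I \<in> interval_forecasts \<Longrightarrow> R' \<omega> I \<Longrightarrow> R \<omega> I"
  shows "I_of R \<omega> \<subseteq> I_of R' \<omega>"
  unfolding I_of_def using assms by (intro Inter_anti_mono) blast

lemma interval_forecastsE:
  assumes "I \<in> interval_forecasts"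
  obtains a b where "0 \<le> a" "a \<le> b" "b \<le> 1" "I = {a..b}"
  using assms unfolding interval_forecasts_def by blast

lemma upper_exp_le0_iff:
  assumes "I \<in> interval_forecasts"
  shows "upper_exp I f \<le> 0 \<longleftrightarrow> (\<forall>p\<in>I. p * f True + (1 - p) * f False \<le> 0)"
proof -
  obtain a b where ab: "0 \<le> a" "a \<le> b" "b \<le> 1" "I = {a..b}" using assms by (rule interval_forecastsE)
  have ne: "(\<lambda>p. p * f True + (1 - p) * f False) ` I \<noteq> {}" using ab by auto
  have "p * f True + (1 - p) * f False \<le> \<bar>f True\<bar> + \<bar>f False\<bar>" if "p \<in> I" for p
  proof -
    have p: "0 \<le> p" "p \<le> 1" using that ab by auto
    have "p * f True \<le> p * \<bar>f True\<bar>" using p(1) by (simp add: mult_left_mono)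
    also have "\<dots> \<le> \<bar>f True\<bar>" using p by (simp add: mult_left_le_one_le)
    finally have 1: "p * f True \<le> \<bar>f True\<bar>" .
    have "(1 - p) * f False \<le> (1 - p) * \<bar>f False\<bar>" using p(2) by (simp add: mult_left_mono)
    also have "\<dots> \<le> \<bar>f False\<bar>" using p by (simp add: mult_left_le_one_le)
    finally have 2: "(1 - p) * f False \<le> \<bar>f False\<bar>" .
    show ?thesis using 1 2 by linarith
  qed
  then have bdd: "bdd_above ((\<lambda>p. p * f True + (1 - p) * f False) ` I)" by (rule bdd_aboveI2)
  show ?thesis unfolding upper_exp_def using cSup_le_iff[OF ne bdd] by simp
qed

lemma CH_imp_wCH: "CH_random \<omega> I \<Longrightarrow> wCH_random \<omega> I"
  unfolding CH_random_def wCH_random_def by blast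

lemma C_imp_S: "C_random \<omega> I \<Longrightarrow> S_random \<omega> I"
  unfolding C_random_def S_random_def
proof (elim contrapos_nn exE conjE)
  fix T \<tau> assume T: "test_supermartingale I T" "computable_real enc_sit T"
    and tau: "mono \<tau>" "\<not> bdd_above (range \<tau>)"
    and ls: "0 \<le> limsup (\<lambda>n. ereal (T (prefix \<omega> n) - \<tau> n))"
  have "\<forall>B. frequently (\<lambda>n. B < T (prefix \<omega> n)) sequentially"
  proof
    fix B
    have f1: "frequently (\<lambda>n. -1 < T (prefix \<omega> n) - \<tau> n) sequentially"
    proof (rule ccontr)
      assume "\<not> ?thesis"
      then have "eventually (\<lambda>n. \<not> -1 < T (prefix \<omega> n) - \<tau> n) sequentially" by (simp only: not_frequently)
      then have "eventually (\<lambda>n. ereal (T (prefix \<omega> n) - \<tau> n) \<le> ereal (-1)) sequentially"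
        by (rule eventually_mono) simp
      then have "limsup (\<lambda>n. ereal (T (prefix \<omega> n) - \<tau> n)) \<le> ereal (-1)" by (rule Limsup_bounded)
      from order.trans[OF ls this] show False by simp
    qed
    obtain m where m: "B + 1 < \<tau> m"
    proof (rule ccontr)
      assume "\<not> thesis"
      with that have "\<And>m. \<tau> m \<le> B + 1" by (meson not_le)
      then have "bdd_above (range \<tau>)" by (rule bdd_aboveI2)
      with tau(2) show False by simp
    qed
    have "eventually (\<lambda>n. B + 1 < \<tau> n) sequentially"
      unfolding eventually_sequentially
    proof (intro exI[of _ m] allI impI)
      fix n assume "m \<le> n"
      then have "\<tau> m \<le> \<tau> n" using tau(1) by (simp add: incseq_def)
      with m show "B + 1 < \<tau> n" by linarith
    qed
    from frequently_eventually_conj[OF f1 this]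
    show "frequently (\<lambda>n. B < T (prefix \<omega> n)) sequentially"
      by (rule frequently_elim1) linarith
  qed
  then have "limsup (\<lambda>n. ereal (T (prefix \<omega> n))) = \<infinity>" by (rule limsup_infty_iff[THEN iffD2])
  then show "\<exists>T. test_supermartingale I T \<and> computable_real enc_sit T \<and> limsup (\<lambda>n. ereal (T (prefix \<omega> n))) = \<infinity>"
    using T by blast
qed

lemma rfn_shift: "rfn (Suc n) G \<Longrightarrow> rfn (Suc (Suc n)) (\<lambda>ys. G (ys ! 1 # drop 2 ys))"
proof -
  assume G: "rfn (Suc n) G"
  have "rfn (Suc (Suc n)) (\<lambda>ys. G (map (\<lambda>h. h ys) ((\<lambda>ys. ys ! 1) # map (\<lambda>i ys. ys ! (i + 2)) [0..<n])))"
    by (rule rfn_comp[OF G]) (auto intro: rfn_proj)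
  then show ?thesis
  proof (rule rfn_cong)
    fix ys :: "nat list" assume l: "length ys = Suc (Suc n)"
    have "map (\<lambda>i. ys ! (i + 2)) [0..<n] = drop 2 ys"
      by (rule nth_equalityI) (use l in auto)
    then show "G (map (\<lambda>h. h ys) ((\<lambda>ys. ys ! 1) # map (\<lambda>i ys. ys ! (i + 2)) [0..<n])) = G (ys ! 1 # drop 2 ys)"
      by (simp add: comp_def)
  qed
qed

lemma rfn_prod [intro]:
  assumes "rfn (Suc n) (\<lambda>ys. F (ys ! 0) (drop 1 ys))" "rfn n L"
  shows "rfn n (\<lambda>xs. \<Prod>k<L xs. F k xs)"
proof -
  have s: "rfn (Suc (Suc n)) (\<lambda>ys. F (ys ! 1) (drop 2 ys))"
    using rfn_shift[OF assms(1)] by simp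
  have "rfn (Suc (Suc n)) (\<lambda>ys. ys ! 0 * F (ys ! 1) (drop 2 ys))"
    by (intro rfn_mult rfn_proj' s) simp
  then have "rfn n (\<lambda>xs. rec_nat 1 (\<lambda>m y. y * F m xs) (L xs))"
    by (intro rfn_rec rfn_const' assms(2)) (simp add: mult.commute)
  moreover have "rec_nat 1 (\<lambda>m y. y * F m xs) l = (\<Prod>k<l. F k xs)" for l xs
    by (induct l) (auto simp: mult.commute)
  ultimately show ?thesis by (rule_tac rfn_cong) auto
qed

lemma rfn_sum [intro]:
  assumes "rfn (Suc n) (\<lambda>ys. F (ys ! 0) (drop 1 ys))" "rfn n L"
  shows "rfn n (\<lambda>xs. \<Sum>k<L xs. F k xs)"
proof -
  have s: "rfn (Suc (Suc n)) (\<lambda>ys. F (ys ! 1) (drop 2 ys))"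
    using rfn_shift[OF assms(1)] by simp
  have "rfn (Suc (Suc n)) (\<lambda>ys. ys ! 0 + F (ys ! 1) (drop 2 ys))"
    by (intro rfn_add rfn_proj' s) simp
  then have "rfn n (\<lambda>xs. rec_nat 0 (\<lambda>m y. y + F m xs) (L xs))"
    by (intro rfn_rec rfn_const' assms(2)) simp
  moreover have "rec_nat 0 (\<lambda>m y. y + F m xs) l = (\<Sum>k<l. F k xs)" for l xs
    by (induct l) (auto simp: add.commute)
  ultimately show ?thesis by (rule_tac rfn_cong) auto
qed

lemma mult_gen_snoc: "mult_gen D (s @ [x]) = mult_gen D s * D s x"
  unfolding mult_gen_def by (simp add: nth_append)

lemma mult_gen_Nil [simp]: "mult_gen D [] = 1"
  unfolding mult_gen_def by simp

lemma mult_gen_pos_part: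
  assumes nn: "\<And>s. 0 \<le> mult_gen D s"
  shows "mult_gen D s = mult_gen (\<lambda>s x. max 0 (D s x)) s"
proof (induct s rule: rev_induct)
  case Nil then show ?case by simp
next
  case (snoc x s)
  show ?case
  proof (cases "mult_gen D s = 0")
    case True
    then show ?thesis using snoc by (simp add: mult_gen_snoc)
  next
    case False
    then have pos: "0 < mult_gen D s" using nn[of s] by simp
    have "0 \<le> mult_gen D s * D s x" using nn[of "s @ [x]"] by (simp add: mult_gen_snoc)
    then have "0 \<le> D s x" using pos by (simp add: zero_le_mult_iff)
    then show ?thesis using snoc by (simp add: mult_gen_snoc)
  qed
qed

definition pn :: "nat \<Rightarrow> nat" where
  "pn r = (if even (fst (prod_decode r)) then fst (prod_decode r) div 2 else 0)"

lemma max_rat_dec: "max 0 (rat_dec r) = real (pn r) / real (Suc (snd (prod_decode r)))"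
  unfolding pn_def rat_dec_eq Let_def
  by (auto simp: max_def divide_nonneg_pos zero_le_divide_iff)

lemma rfn_pn [intro]: "rfn n f \<Longrightarrow> rfn n (\<lambda>xs. pn (f xs))"
  unfolding pn_def by (intro rpred_if rpred_even rfn_div rfn_fst_pd rfn_const'; assumption)

lemma MartinLoef_imp_wML:
  assumes "MartinLoef_random \<omega> I"
  shows "weak_MartinLoef_random \<omega> I"
  using assms unfolding MartinLoef_random_def weak_MartinLoef_random_def
proof (elim contrapos_nn exE conjE)
  fix D assume ts: "test_supermartingale I (mult_gen D)"
    and lsc: "lower_semicomputable enc_sit_out (\<lambda>(s, x). D s x)"
    and ls: "limsup (\<lambda>n. ereal (mult_gen D (prefix \<omega> n))) = \<infinity>"
  from lsc obtain q where q: "recursive2 q"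
    and qc: "\<And>a. incseq (\<lambda>n. rat_dec (q (enc_sit_out a) n))"
    and ql: "\<And>a. (\<lambda>n. rat_dec (q (enc_sit_out a) n)) \<longlonglongrightarrow> (case a of (s, x) \<Rightarrow> D s x)"
    unfolding lower_semicomputable_def by blast
  define r where "r s x n = max 0 (rat_dec (q (enc_sit_out (s, x)) n))" for s x n
  have r_inc: "r s x m \<le> r s x n" if "m \<le> n" for s x m n
    unfolding r_def using qc[of "(s, x)"] that by (simp add: incseq_def max.coboundedI2)
  have r_nn: "0 \<le> r s x n" for s x n unfolding r_def by simp
  have r_lim: "(\<lambda>n. r s x n) \<longlonglongrightarrow> max 0 (D s x)" for s x
    unfolding r_def using ql[of "(s, x)"] by (intro tendsto_max tendsto_const) simp_all
  define Q where "Q c n = prod_encode (2 * (\<Prod>k<lenc c. pn (q (prod_encode (c - 2 ^ k * shc k c, if even (shc k c) then 1 else 0)) n)),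
       (\<Prod>k<lenc c. Suc (snd (prod_decode (q (prod_encode (c - 2 ^ k * shc k c, if even (shc k c) then 1 else 0)) n)))) - 1)" for c n
  have Qrec: "recursive2 Q"
  proof (rule rfn_recursive2)
    note qr = rfn_app2[OF q]
    show "rfn 2 (\<lambda>xs. Q (xs ! 0) (xs ! 1))"
      unfolding Q_def
      by (intro rfn_prod_encode rfn_mult rfn_minus rfn_prod rfn_Suc' rfn_snd_pd qr rfn_lenc rfn_pow rfn_shc
          rpred_if rpred_even rfn_pn rfn_proj' rfn_proj_drop rfn_const' ; simp?)
  qed
  have Qval: "rat_dec (Q (enc_sit s) n) = (\<Prod>k<length s. r (take k s) (s ! k) n)" for s n
  proof -
    have e: "prod_encode (enc_sit s - 2 ^ k * shc k (enc_sit s), if even (shc k (enc_sit s)) then 1 else 0)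
        = enc_sit_out (take k s, s ! k)" if "k < length s" for k
      using that by (simp add: enc_sit_out_def take_enc nth_enc)
    define N where "N = (\<Prod>k<length s. pn (q (enc_sit_out (take k s, s ! k)) n))"
    define M where "M = (\<Prod>k<length s. Suc (snd (prod_decode (q (enc_sit_out (take k s, s ! k)) n))))"
    have P1: "(\<Prod>k<length s. pn (q (prod_encode (enc_sit s - 2 ^ k * shc k (enc_sit s), if even (shc k (enc_sit s)) then 1 else 0)) n)) = N"
      unfolding N_def by (rule prod.cong) (simp_all add: e)
    have P2: "(\<Prod>k<length s. Suc (snd (prod_decode (q (prod_encode (enc_sit s - 2 ^ k * shc k (enc_sit s), if even (shc k (enc_sit s)) then 1 else 0)) n)))) = M"
      unfolding M_def by (rule prod.cong) (simp_all add: e)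
    have QNM: "Q (enc_sit s) n = prod_encode (2 * N, M - 1)"
      unfolding Q_def lenc_enc P1 P2 ..
    have M0: "0 < M" unfolding M_def by (simp add: prod_pos)
    have "rat_dec (Q (enc_sit s) n) = real N / real M" using QNM rat_dec_code[OF M0] by simp
    also have "\<dots> = (\<Prod>k<length s. real (pn (q (enc_sit_out (take k s, s ! k)) n)) /
                          real (Suc (snd (prod_decode (q (enc_sit_out (take k s, s ! k)) n)))))"
      unfolding N_def M_def by (simp add: prod_dividef)
    also have "\<dots> = (\<Prod>k<length s. r (take k s) (s ! k) n)"
      unfolding r_def max_rat_dec ..
    finally show ?thesis .
  qed
  have lscT: "lower_semicomputable enc_sit (mult_gen D)"
    unfolding lower_semicomputable_def
  proof (intro exI conjI allI)
    show "recursive2 Q" by (rule Qrec)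
    fix s
    show "incseq (\<lambda>n. rat_dec (Q (enc_sit s) n))"
      unfolding Qval incseq_def by (auto intro!: prod_mono simp: r_nn r_inc)
    have "(\<lambda>n. \<Prod>k<length s. r (take k s) (s ! k) n) \<longlonglongrightarrow> (\<Prod>k<length s. max 0 (D (take k s) (s ! k)))"
      by (intro tendsto_prod r_lim)
    moreover have "(\<Prod>k<length s. max 0 (D (take k s) (s ! k))) = mult_gen D s"
      using mult_gen_pos_part[of D s] ts unfolding test_supermartingale_def mult_gen_def by simp
    ultimately show "(\<lambda>n. rat_dec (Q (enc_sit s) n)) \<longlonglongrightarrow> mult_gen D s"
      unfolding Qval by simp
  qed
  show "\<exists>T. test_supermartingale I T \<and> lower_semicomputable enc_sit T \<and> limsup (\<lambda>n. ereal (T (prefix \<omega> n))) = \<infinity>"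
    using ts lscT ls by blast
qed

definition Pf :: "nat \<Rightarrow> nat" where
  "Pf r = (if even (fst (prod_decode r)) then fst (prod_decode r) div 2 + Suc (snd (prod_decode r))
           else Suc (snd (prod_decode r)) - Suc (fst (prod_decode r) div 2))"

lemma rfn_Pf [intro]: "rfn n f \<Longrightarrow> rfn n (\<lambda>xs. Pf (f xs))"
  unfolding Pf_def by (intro rpred_if rpred_even rfn_add rfn_minus rfn_div rfn_Suc' rfn_fst_pd rfn_snd_pd rfn_const'; assumption)

lemma max_rat_dec1: "max 0 (rat_dec r + 1) = real (Pf r) / real (Suc (snd (prod_decode r)))"
proof -
  obtain a b where ab: "prod_decode r = (a, b)" by (cases "prod_decode r")
  show ?thesis
  proof (cases "even a")
    case True
    then show ?thesis unfolding Pf_def rat_dec_eq Let_def ab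
      by (simp add: field_simps max_def)
  next
    case False
    have "rat_dec r + 1 = (real b - real (a div 2)) / real (Suc b)"
      using False unfolding rat_dec_eq Let_def ab by (simp add: field_simps)
    moreover have "max 0 ((real b - real (a div 2)) / real (Suc b)) = real (b - a div 2) / real (Suc b)"
      by (cases "a div 2 \<le> b") (auto simp: of_nat_diff max_def zero_le_divide_iff)
    ultimately show ?thesis using False unfolding Pf_def ab by simp
  qed
qed

definition cc1 :: "nat \<Rightarrow> nat" where
  "cc1 c = fst (prod_decode c) + 2 ^ lenc (fst (prod_decode c)) * (snd (prod_decode c) + 1)"

lemma rfn_cc1 [intro]: "rfn n f \<Longrightarrow> rfn n (\<lambda>xs. cc1 (f xs))"
  unfolding cc1_def by (intro rfn_add rfn_mult rfn_pow rfn_lenc rfn_fst_pd rfn_snd_pd rfn_const'; assumption)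

lemma cc1_enc: "cc1 (enc_sit_out (s, x)) = enc_sit (s @ [x])"
  unfolding cc1_def enc_sit_out_def by (simp add: snoc_enc lenc_enc)

lemma cc2_enc: "fst (prod_decode (enc_sit_out (s, x))) = enc_sit s"
  unfolding enc_sit_out_def by simp

definition Lnum :: "(nat \<Rightarrow> nat \<Rightarrow> nat) \<Rightarrow> nat \<Rightarrow> nat \<Rightarrow> nat" where
  "Lnum qT c m = (Pf (qT (cc1 c) m) * 2 ^ m - 2 * Suc (snd (prod_decode (qT (cc1 c) m))))
      * Suc (snd (prod_decode (qT (fst (prod_decode c)) m)))"

definition Lden :: "(nat \<Rightarrow> nat \<Rightarrow> nat) \<Rightarrow> nat \<Rightarrow> nat \<Rightarrow> nat" where
  "Lden qT c m = Suc (snd (prod_decode (qT (cc1 c) m)))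
      * (Pf (qT (fst (prod_decode c)) m) * 2 ^ m + 2 * Suc (snd (prod_decode (qT (fst (prod_decode c)) m))))"

lemma Lden_pos: "0 < Lden qT c m"
  unfolding Lden_def by simp

lemma rfn_Lnum [intro]: "recursive2 qT \<Longrightarrow> rfn n f \<Longrightarrow> rfn n g \<Longrightarrow> rfn n (\<lambda>xs. Lnum qT (f xs) (g xs))"
  unfolding Lnum_def
  by (intro rfn_add rfn_mult rfn_minus rfn_pow rfn_Pf rfn_Suc' rfn_snd_pd rfn_fst_pd rfn_cc1 rfn_app2[of qT] rfn_const'; assumption)

lemma rfn_Lden [intro]: "recursive2 qT \<Longrightarrow> rfn n f \<Longrightarrow> rfn n g \<Longrightarrow> rfn n (\<lambda>xs. Lden qT (f xs) (g xs))"
  unfolding Lden_def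
  by (intro rfn_add rfn_mult rfn_minus rfn_pow rfn_Pf rfn_Suc' rfn_snd_pd rfn_fst_pd rfn_cc1 rfn_app2[of qT] rfn_const'; assumption)

definition Jx :: "(nat \<Rightarrow> nat \<Rightarrow> nat) \<Rightarrow> nat \<Rightarrow> nat \<Rightarrow> nat" where
  "Jx qT c n = rec_nat 0 (\<lambda>m j. if Lnum qT c j * Lden qT c (Suc m) \<le> Lnum qT c (Suc m) * Lden qT c j then Suc m else j) n"

lemma rfn_Jx: "recursive2 qT \<Longrightarrow> rfn 2 (\<lambda>xs. Jx qT (xs ! 0) (xs ! 1))"
  unfolding Jx_def
  by (rule rfn_rec; (intro rpred_if rpred_le rfn_mult rfn_Lnum rfn_Lden rfn_Suc' rfn_proj' rfn_proj_drop rfn_const')?; simp?)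

definition Qc :: "(nat \<Rightarrow> nat \<Rightarrow> nat) \<Rightarrow> nat \<Rightarrow> nat \<Rightarrow> nat" where
  "Qc qT c n = prod_encode (2 * Lnum qT c (Jx qT c n), Lden qT c (Jx qT c n) - 1)"

lemma Qc_rec: "recursive2 qT \<Longrightarrow> recursive2 (Qc qT)"
proof -
  assume q: "recursive2 qT"
  note J = rfn_comp2[OF rfn_Jx[OF q], simplified]
  show ?thesis
    by (rule rfn_recursive2, unfold Qc_def)
       (intro rfn_prod_encode rfn_mult rfn_minus rfn_Lnum[OF q] rfn_Lden[OF q] J rfn_proj' rfn_const'; simp)
qed


lemma approx_tendsto:
  fixes f :: "nat \<Rightarrow> real"
  assumes "\<And>n. \<bar>x - f n\<bar> \<le> 1 / 2 ^ n"
  shows "f \<longlonglongrightarrow> x"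
proof (rule tendsto_sandwich[of "\<lambda>n. x - (1/2) ^ n" _ _ "\<lambda>n. x + (1/2) ^ n"])
  have h: "x - (1/2) ^ n \<le> f n \<and> f n \<le> x + (1/2) ^ n" for n
    using assms[of n] by (simp add: power_one_over abs_le_iff)
  show "\<forall>\<^sub>F n in sequentially. x - (1 / 2) ^ n \<le> f n"
    using h by (intro always_eventually allI) blast
  show "\<forall>\<^sub>F n in sequentially. f n \<le> x + (1 / 2) ^ n"
    using h by (intro always_eventually allI) blast
  have "(\<lambda>n. (1/2::real) ^ n) \<longlonglongrightarrow> 0" by (rule LIMSEQ_realpow_zero) simp_all
  then show "(\<lambda>n. x - (1 / 2) ^ n) \<longlonglongrightarrow> x" "(\<lambda>n. x + (1 / 2) ^ n) \<longlonglongrightarrow> x"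
    using tendsto_diff[OF tendsto_const] tendsto_add[OF tendsto_const] by fastforce+
qed

lemma Lval_alg:
  fixes P1 B1 P2 B2 E :: nat
  assumes "0 < B1" "0 < B2" "0 < E"
  shows "real ((P1 * E - 2 * B1) * B2) / real (B1 * (P2 * E + 2 * B2))
       = max 0 (real P1 / real B1 / 2 - 1 / real E) / (real P2 / real B2 / 2 + 1 / real E)"
proof -
  have d: "real P2 / real B2 / 2 + 1 / real E = (real P2 * real E + 2 * real B2) / (2 * real B2 * real E)"
    using assms by (simp add: field_simps)
  have n: "max 0 (real P1 / real B1 / 2 - 1 / real E) = real (P1 * E - 2 * B1) / (2 * real B1 * real E)"
  proof (cases "2 * B1 \<le> P1 * E")
    case True
    then have "real (P1 * E - 2 * B1) = real P1 * real E - 2 * real B1" by (simp add: of_nat_diff)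
    moreover have "real P1 / real B1 / 2 - 1 / real E = (real P1 * real E - 2 * real B1) / (2 * real B1 * real E)"
      using assms by (simp add: field_simps)
    moreover have "0 \<le> real P1 * real E - 2 * real B1" using True
      by (metis of_nat_le_iff of_nat_mult of_nat_numeral diff_ge_0_iff_ge)
    ultimately show ?thesis using assms by (simp add: max_def)
  next
    case False
    then have "real P1 * real E < 2 * real B1"
      by (metis not_le of_nat_less_iff of_nat_mult of_nat_numeral)
    then have "real P1 / real B1 / 2 - 1 / real E \<le> 0"
      using assms by (simp add: field_simps)
    then show ?thesis using False by (simp add: max_def)
  qed
  show ?thesis unfolding d n using assms by (simp add: field_simps)
qed

lemma Lval_eq:
  "real (Lnum qT c m) / real (Lden qT c m)
   = max 0 (max 0 (rat_dec (qT (cc1 c) m) + 1) / 2 - 1 / 2 ^ m)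
     / (max 0 (rat_dec (qT (fst (prod_decode c)) m) + 1) / 2 + 1 / 2 ^ m)"
  unfolding Lnum_def Lden_def max_rat_dec1
  using Lval_alg[of "Suc (snd (prod_decode (qT (cc1 c) m)))" "Suc (snd (prod_decode (qT (fst (prod_decode c)) m)))"
      "2 ^ m" "Pf (qT (cc1 c) m)" "Pf (qT (fst (prod_decode c)) m)"]
  by simp

lemma Jx_props:
  fixes qT :: "nat \<Rightarrow> nat \<Rightarrow> nat" and c :: nat
  defines "Lv \<equiv> \<lambda>m. real (Lnum qT c m) / real (Lden qT c m)"
  shows "Jx qT c n \<le> n \<and> (\<forall>m\<le>n. Lv m \<le> Lv (Jx qT c n))"
proof (induct n)
  case 0 then show ?case by (simp add: Jx_def)
next
  case (Suc n)
  have cmp: "Lnum qT c j * Lden qT c k \<le> Lnum qT c k * Lden qT c j \<longleftrightarrow> Lv j \<le> Lv k" for j k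
  proof -
    have "Lv j \<le> Lv k \<longleftrightarrow> real (Lnum qT c j) * real (Lden qT c k) \<le> real (Lnum qT c k) * real (Lden qT c j)"
      unfolding Lv_def using Lden_pos[of qT c j] Lden_pos[of qT c k] by (simp add: divide_le_eq le_divide_eq field_simps)
    also have "\<dots> \<longleftrightarrow> Lnum qT c j * Lden qT c k \<le> Lnum qT c k * Lden qT c j"
      by (metis of_nat_le_iff of_nat_mult)
    finally show ?thesis by simp
  qed
  have J: "Jx qT c (Suc n) = (if Lv (Jx qT c n) \<le> Lv (Suc n) then Suc n else Jx qT c n)"
    unfolding cmp[symmetric] by (simp add: Jx_def)
  show ?case
  proof (cases "Lv (Jx qT c n) \<le> Lv (Suc n)")
    case True
    then show ?thesis using Suc J by (auto simp: le_Suc_eq)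
  next
    case False
    then show ?thesis using Suc J by (auto simp: le_Suc_eq)
  qed
qed


lemma wML_imp_C:
  assumes I: "I \<in> interval_forecasts" and wml: "weak_MartinLoef_random \<omega> I"
  shows "C_random \<omega> I"
  using wml unfolding weak_MartinLoef_random_def C_random_def
proof (elim contrapos_nn exE conjE)
  fix T assume ts: "test_supermartingale I T" and cT: "computable_real enc_sit T"
    and ls: "limsup (\<lambda>n. ereal (T (prefix \<omega> n))) = \<infinity>"
  from cT obtain qT where qT: "recursive2 qT"
    and qa: "\<And>a n. \<bar>T a - rat_dec (qT (enc_sit a) n)\<bar> \<le> 1 / 2 ^ n"
    unfolding computable_real_def by blast
  have T0: "T [] = 1" and Tnn: "\<And>s. 0 \<le> T s"
    and Tsm: "\<And>s. upper_exp I (\<lambda>x. T (s @ [x]) - T s) \<le> 0"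
    using ts unfolding test_supermartingale_def by auto
  define T' where "T' s = (T s + 1) / 2" for s
  have T'pos: "1/2 \<le> T' s" for s unfolding T'_def using Tnn[of s] by simp
  define D where "D s x = T' (s @ [x]) / T' s" for s x
  have mgD: "mult_gen D s = T' s" for s
  proof (induct s rule: rev_induct)
    case Nil then show ?case by (simp add: T'_def T0)
  next
    case (snoc x s)
    have "T' s \<noteq> 0" using T'pos[of s] by linarith
    then show ?case using snoc by (simp add: mult_gen_snoc D_def)
  qed
  have tsD: "test_supermartingale I (mult_gen D)"
    unfolding test_supermartingale_def mgD
  proof (intro conjI allI)
    show "T' [] = 1" by (simp add: T'_def T0)
    fix s
    show "0 \<le> T' s" using T'pos[of s] by linarith
    have "\<forall>p\<in>I. p * (T (s @ [True]) - T s) + (1 - p) * (T (s @ [False]) - T s) \<le> 0"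
      using Tsm[of s] upper_exp_le0_iff[OF I] by simp
    then have "\<forall>p\<in>I. p * (T' (s @ [True]) - T' s) + (1 - p) * (T' (s @ [False]) - T' s) \<le> 0"
      unfolding T'_def by (auto simp: field_simps)
    then show "upper_exp I (\<lambda>x. T' (s @ [x]) - T' s) \<le> 0"
      using upper_exp_le0_iff[OF I] by simp
  qed
  have lsD: "limsup (\<lambda>n. ereal (mult_gen D (prefix \<omega> n))) = \<infinity>"
  proof -
    have F: "\<forall>B. frequently (\<lambda>n. B < T (prefix \<omega> n)) sequentially"
      using ls by (rule limsup_infty_iff[THEN iffD1])
    have "\<forall>B. frequently (\<lambda>n. B < T' (prefix \<omega> n)) sequentially"
    proof
      fix B
      have "frequently (\<lambda>n. 2 * B - 1 < T (prefix \<omega> n)) sequentially" using F by blast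
      then show "frequently (\<lambda>n. B < T' (prefix \<omega> n)) sequentially"
        by (rule frequently_elim1) (simp add: T'_def)
    qed
    then show ?thesis unfolding mgD by (rule limsup_infty_iff[THEN iffD2])
  qed
  have lscD: "lower_semicomputable enc_sit_out (\<lambda>(s, x). D s x)"
    unfolding lower_semicomputable_def
  proof (intro exI conjI allI)
    show "recursive2 (Qc qT)" by (rule Qc_rec[OF qT])
    fix a :: "bool list \<times> bool"
    obtain s x where a: "a = (s, x)" by (cases a)
    define c where "c = enc_sit_out (s, x)"
    define Lv where "Lv m = real (Lnum qT c m) / real (Lden qT c m)" for m
    define e where "e m = (1::real) / 2 ^ m" for m
    define t1 where "t1 m = rat_dec (qT (enc_sit (s @ [x])) m)" for m
    define t2 where "t2 m = rat_dec (qT (enc_sit s) m)" for m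
    have Lv_eq: "Lv m = max 0 (max 0 (t1 m + 1) / 2 - e m) / (max 0 (t2 m + 1) / 2 + e m)" for m
      unfolding Lv_def Lval_eq t1_def t2_def e_def c_def cc1_enc cc2_enc ..
    have Qv: "rat_dec (Qc qT c n) = Lv (Jx qT c n)" for n
      unfolding Qc_def Lv_def using rat_dec_code[OF Lden_pos] by simp
    have e_pos: "0 < e m" for m unfolding e_def by simp
    have a1: "\<bar>T (s @ [x]) - t1 m\<bar> \<le> e m" for m unfolding t1_def e_def by (rule qa)
    have a2: "\<bar>T s - t2 m\<bar> \<le> e m" for m unfolding t2_def e_def by (rule qa)
    have Lv_le: "Lv m \<le> D s x" for m
    proof -
      have num: "max 0 (max 0 (t1 m + 1) / 2 - e m) \<le> T' (s @ [x])"
        using a1[of m] Tnn[of "s @ [x]"] e_pos[of m] unfolding T'_def by (auto simp: max_def abs_le_iff)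
      have den: "T' s \<le> max 0 (t2 m + 1) / 2 + e m"
        using a2[of m] e_pos[of m] unfolding T'_def by (auto simp: max_def abs_le_iff)
      have "Lv m \<le> T' (s @ [x]) / T' s"
        unfolding Lv_eq by (rule frac_le[OF _ num _ den]) (use T'pos[of "s @ [x]"] T'pos[of s] in simp_all)
      then show ?thesis unfolding D_def .
    qed
    have e_lim: "e \<longlonglongrightarrow> 0"
      using approx_tendsto[of 0 e] unfolding e_def by simp
    have t1_lim: "t1 \<longlonglongrightarrow> T (s @ [x])" by (rule approx_tendsto) (use a1 e_def in simp)
    have t2_lim: "t2 \<longlonglongrightarrow> T s" by (rule approx_tendsto) (use a2 e_def in simp)
    have "Lv \<longlonglongrightarrow> max 0 (max 0 (T (s @ [x]) + 1) / 2 - 0) / (max 0 (T s + 1) / 2 + 0)"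
      unfolding Lv_eq[abs_def]
    proof (rule tendsto_divide)
      show "(\<lambda>m. max 0 (max 0 (t1 m + 1) / 2 - e m)) \<longlonglongrightarrow> max 0 (max 0 (T (s @ [x]) + 1) / 2 - 0)"
        by (intro tendsto_max tendsto_diff tendsto_divide tendsto_add t1_lim e_lim tendsto_const) simp
      show "(\<lambda>m. max 0 (t2 m + 1) / 2 + e m) \<longlonglongrightarrow> max 0 (T s + 1) / 2 + 0"
        by (intro tendsto_max tendsto_diff tendsto_divide tendsto_add t2_lim e_lim tendsto_const) simp
      show "max 0 (T s + 1) / 2 + 0 \<noteq> 0" using Tnn[of s] by (simp add: max_def)
    qed
    also have "max 0 (max 0 (T (s @ [x]) + 1) / 2 - 0) / (max 0 (T s + 1) / 2 + 0) = D s x"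
      unfolding D_def T'_def using Tnn[of s] Tnn[of "s @ [x]"] by simp
    finally have Lv_lim: "Lv \<longlonglongrightarrow> D s x" .
    have JP: "Jx qT c n \<le> n \<and> (\<forall>m\<le>n. Lv m \<le> Lv (Jx qT c n))" for n
      unfolding Lv_def by (rule Jx_props)
    show "incseq (\<lambda>n. rat_dec (Qc qT (enc_sit_out a) n))"
      unfolding a c_def[symmetric] Qv incseq_def
    proof (intro allI impI)
      fix m n :: nat assume "m \<le> n"
      then have "Jx qT c m \<le> n" using JP[of m] by linarith
      then show "Lv (Jx qT c m) \<le> Lv (Jx qT c n)" using JP[of n] by blast
    qed
    show "(\<lambda>n. rat_dec (Qc qT (enc_sit_out a) n)) \<longlonglongrightarrow> (case a of (s, x) \<Rightarrow> D s x)"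
      unfolding a c_def[symmetric] Qv prod.case
    proof (rule tendsto_sandwich[OF _ _ Lv_lim tendsto_const])
      show "\<forall>\<^sub>F n in sequentially. Lv n \<le> Lv (Jx qT c n)" using JP by (intro always_eventually) blast
      show "\<forall>\<^sub>F n in sequentially. Lv (Jx qT c n) \<le> D s x" using Lv_le by (intro always_eventually) blast
    qed
  qed
  show "\<exists>D. test_supermartingale I (mult_gen D) \<and> lower_semicomputable enc_sit_out (\<lambda>(s, x). D s x)
          \<and> limsup (\<lambda>n. ereal (mult_gen D (prefix \<omega> n))) = \<infinity>"
    using tsD lscD lsD by blast
qed

definition N1 :: "(bool list \<Rightarrow> bool) \<Rightarrow> bool list \<Rightarrow> nat" where
  "N1 S s = (\<Sum>k<length s. if S (take k s) \<and> s ! k then 1 else 0)"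

definition N0 :: "(bool list \<Rightarrow> bool) \<Rightarrow> bool list \<Rightarrow> nat" where
  "N0 S s = (\<Sum>k<length s. if S (take k s) \<and> \<not> s ! k then 1 else 0)"

definition betT :: "(bool list \<Rightarrow> bool) \<Rightarrow> nat \<Rightarrow> nat \<Rightarrow> nat \<Rightarrow> bool list \<Rightarrow> real" where
  "betT S p1 p0 q s = (real p1 / real q) ^ N1 S s * (real p0 / real q) ^ N0 S s"

lemma N1_snoc: "N1 S (s @ [x]) = N1 S s + (if S s \<and> x then 1 else 0)"
proof -
  have "N1 S (s @ [x]) = (\<Sum>k<Suc (length s). if S (take k (s @ [x])) \<and> (s @ [x]) ! k then 1 else 0)"
    unfolding N1_def by simp
  also have "\<dots> = (\<Sum>k<length s. if S (take k (s @ [x])) \<and> (s @ [x]) ! k then 1 else 0) + (if S s \<and> x then 1 else 0)"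
    by simp
  also have "(\<Sum>k<length s. if S (take k (s @ [x])) \<and> (s @ [x]) ! k then 1 else 0) = N1 S s"
    unfolding N1_def by (rule sum.cong) (auto simp: nth_append)
  finally show ?thesis .
qed

lemma N0_snoc: "N0 S (s @ [x]) = N0 S s + (if S s \<and> \<not> x then 1 else 0)"
proof -
  have "N0 S (s @ [x]) = (\<Sum>k<Suc (length s). if S (take k (s @ [x])) \<and> \<not> (s @ [x]) ! k then 1 else 0)"
    unfolding N0_def by simp
  also have "\<dots> = (\<Sum>k<length s. if S (take k (s @ [x])) \<and> \<not> (s @ [x]) ! k then 1 else 0) + (if S s \<and> \<not> x then 1 else 0)"
    by simp
  also have "(\<Sum>k<length s. if S (take k (s @ [x])) \<and> \<not> (s @ [x]) ! k then 1 else 0) = N0 S s"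
    unfolding N0_def by (rule sum.cong) (auto simp: nth_append)
  finally show ?thesis .
qed

lemma length_prefix [simp]: "length (prefix \<omega> n) = n"
  unfolding prefix_def by simp

lemma take_prefix: "k \<le> n \<Longrightarrow> take k (prefix \<omega> n) = prefix \<omega> k"
  unfolding prefix_def by (simp add: take_map)

lemma nth_prefix: "k < n \<Longrightarrow> prefix \<omega> n ! k = \<omega> k"
  unfolding prefix_def by simp

lemma N1_prefix: "N1 S (prefix \<omega> n) = (\<Sum>k<n. if S (prefix \<omega> k) \<and> \<omega> k then 1 else 0)"
  unfolding N1_def by (rule sum.cong) (auto simp: take_prefix nth_prefix)

lemma N0_prefix: "N0 S (prefix \<omega> n) = (\<Sum>k<n. if S (prefix \<omega> k) \<and> \<not> \<omega> k then 1 else 0)"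
  unfolding N0_def by (rule sum.cong) (auto simp: take_prefix nth_prefix)

lemma sel_count_N: "sel_count S \<omega> n = real (N1 S (prefix \<omega> n) + N0 S (prefix \<omega> n))"
proof -
  have "sel_count S \<omega> n = real (\<Sum>k<n. if S (prefix \<omega> k) then 1 else 0)"
    unfolding sel_count_def of_nat_sum by (rule sum.cong) auto
  also have "(\<Sum>k<n. if S (prefix \<omega> k) then 1 else 0) = N1 S (prefix \<omega> n) + N0 S (prefix \<omega> n)"
    unfolding N1_prefix N0_prefix sum.distrib[symmetric] by (rule sum.cong) auto
  finally show ?thesis .
qed

lemma rel_freq_N: "rel_freq S \<omega> n = real (N1 S (prefix \<omega> n)) / real (N1 S (prefix \<omega> n) + N0 S (prefix \<omega> n))"
proof -
  have "(\<Sum>k<n. of_bool (S (prefix \<omega> k)) * of_bool (\<omega> k)) = real (N1 S (prefix \<omega> n))"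
    unfolding N1_prefix of_nat_sum by (rule sum.cong) auto
  then show ?thesis unfolding rel_freq_def sel_count_N by simp
qed

lemma betT_snoc: "betT S p1 p0 q (s @ [x]) = betT S p1 p0 q s *
    (if S s then (if x then real p1 / real q else real p0 / real q) else 1)"
  unfolding betT_def N1_snoc N0_snoc by (auto simp: power_add)

lemma betT_test:
  assumes I: "I \<in> interval_forecasts"
    and cond: "\<forall>p\<in>I. p * (real p1 / real q - 1) + (1 - p) * (real p0 / real q - 1) \<le> 0"
  shows "test_supermartingale I (betT S p1 p0 q)"
  unfolding test_supermartingale_def
proof (intro conjI allI)
  show "betT S p1 p0 q [] = 1" by (simp add: betT_def N1_def N0_def)
  fix s
  show "0 \<le> betT S p1 p0 q s" by (simp add: betT_def)
  show "upper_exp I (\<lambda>x. betT S p1 p0 q (s @ [x]) - betT S p1 p0 q s) \<le> 0"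
    unfolding upper_exp_le0_iff[OF I] betT_snoc
  proof
    fix p assume p: "p \<in> I"
    define t where "t = betT S p1 p0 q s"
    have t0: "0 \<le> t" unfolding t_def by (simp add: betT_def)
    show "p * (t * (if S s then if True then real p1 / real q else real p0 / real q else 1) - t) +
          (1 - p) * (t * (if S s then if False then real p1 / real q else real p0 / real q else 1) - t) \<le> 0"
    proof (cases "S s")
      case True
      have "p * (t * (real p1 / real q) - t) + (1 - p) * (t * (real p0 / real q) - t)
          = t * (p * (real p1 / real q - 1) + (1 - p) * (real p0 / real q - 1))"
        by (simp add: algebra_simps)
      also have "\<dots> \<le> 0" using cond p t0 by (simp add: mult_nonneg_nonpos)
      finally show ?thesis using True by simp
    qed simp
  qed
qed

lemma betT_comp:
  assumes S: "recursive_sel S" and q: "0 < q"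
  shows "computable_real enc_sit (betT S p1 p0 q)"
proof -
  from S obtain g where g: "recursive1 g" and gS: "\<And>s. g (enc_sit s) = (if S s then 1 else 0)"
    unfolding recursive_sel_def by blast
  define N1c where "N1c c = (\<Sum>k<lenc c. if g (c - 2 ^ k * shc k c) = 1 \<and> even (shc k c) then 1 else (0::nat))" for c
  define N0c where "N0c c = (\<Sum>k<lenc c. if g (c - 2 ^ k * shc k c) = 1 \<and> \<not> even (shc k c) then 1 else (0::nat))" for c
  define code where "code c n = prod_encode (2 * (p1 ^ N1c c * p0 ^ N0c c), q ^ (N1c c + N0c c) - 1)" for c n :: nat
  have rec: "recursive2 code"
  proof (rule rfn_recursive2)
    note gr = rfn_app1[OF g]
    show "rfn 2 (\<lambda>xs. code (xs ! 0) (xs ! 1))"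
      unfolding code_def N1c_def N0c_def
      by (intro rfn_prod_encode rfn_mult rfn_minus rfn_pow rfn_add rfn_sum rpred_if rpred_conj rpred_not rpred_eq
          rpred_even gr rfn_shc rfn_lenc rfn_proj' rfn_proj_drop rfn_const'; simp)
  qed
  have N1c: "N1c (enc_sit s) = N1 S s" for s
    unfolding N1c_def N1_def lenc_enc
    by (rule sum.cong) (auto simp: take_enc[symmetric] nth_enc[symmetric] gS)
  have N0c: "N0c (enc_sit s) = N0 S s" for s
    unfolding N0c_def N0_def lenc_enc
    by (rule sum.cong) (auto simp: take_enc[symmetric] nth_enc[symmetric] gS)
  have val: "rat_dec (code (enc_sit s) n) = betT S p1 p0 q s" for s n
  proof -
    have "rat_dec (code (enc_sit s) n) = real (p1 ^ N1 S s * p0 ^ N0 S s) / real (q ^ (N1 S s + N0 S s))"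
      unfolding code_def N1c N0c using q by (subst rat_dec_code) simp_all
    also have "\<dots> = betT S p1 p0 q s"
      unfolding betT_def by (simp add: power_divide power_add)
    finally show ?thesis .
  qed
  show ?thesis unfolding computable_real_def
    by (intro exI[of _ code] conjI rec allI) (simp add: val)
qed

lemma growth:
  fixes b e :: real and G B :: nat
  assumes b: "0 \<le> b" "b \<le> 1" and e: "0 < e" "e \<le> 1/2"
    and f: "(b + 3 * e) * real (G + B) \<le> real G"
  shows "(1 + e\<^sup>2) ^ (G + B) \<le> (1 + e * (1 - b)) ^ G * (1 - e * b) ^ B"
proof -
  define x1 where "x1 = e * (1 - b)"
  define x0 where "x0 = e * b"
  have x1: "0 \<le> x1" "x1 \<le> e" unfolding x1_def using b e by (auto simp: mult_left_le)
  have x0: "0 \<le> x0" "x0 \<le> e" unfolding x0_def using b e by (auto simp: mult_left_le)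
  have "\<bar>ln (1 + x1) - x1\<bar> \<le> 2 * x1\<^sup>2" using x1 e by (intro abs_ln_one_plus_x_minus_x_bound) simp
  moreover have "x1\<^sup>2 \<le> e\<^sup>2" using x1 by (intro power_mono) simp_all
  ultimately have l1: "x1 - 2 * e\<^sup>2 \<le> ln (1 + x1)" by linarith
  have "\<bar>ln (1 + (- x0)) - (- x0)\<bar> \<le> 2 * (- x0)\<^sup>2" using x0 e by (intro abs_ln_one_plus_x_minus_x_bound) simp
  moreover have "x0\<^sup>2 \<le> e\<^sup>2" using x0 by (intro power_mono) simp_all
  ultimately have l0: "- x0 - 2 * e\<^sup>2 \<le> ln (1 - x0)" by simp
  have pos1: "0 < 1 + x1" using x1 by simp
  have pos0: "0 < 1 - x0" using x0 e by simp
  have "ln ((1 + e\<^sup>2) ^ (G + B)) = real (G + B) * ln (1 + e\<^sup>2)" by (rule ln_realpow)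
  also have "\<dots> \<le> real (G + B) * e\<^sup>2"
    using ln_le_minus_one[of "1 + e\<^sup>2"] by (intro mult_left_mono) (simp_all add: add_pos_nonneg)
  also have "\<dots> \<le> real G * (x1 - 2 * e\<^sup>2) + real B * (- x0 - 2 * e\<^sup>2)"
  proof -
    have "real G * (x1 - 2 * e\<^sup>2) + real B * (- x0 - 2 * e\<^sup>2)
        = e * (real G - b * real (G + B)) - 2 * e\<^sup>2 * real (G + B)"
      unfolding x1_def x0_def by (simp add: algebra_simps)
    moreover have "e * (3 * e * real (G + B)) \<le> e * (real G - b * real (G + B))"
      using f e by (intro mult_left_mono) (simp_all add: algebra_simps)
    ultimately show ?thesis by (simp add: power2_eq_square algebra_simps)
  qed
  also have "\<dots> \<le> real G * ln (1 + x1) + real B * ln (1 - x0)"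
    using l1 l0 by (intro add_mono mult_left_mono) simp_all
  also have "\<dots> = ln ((1 + x1) ^ G * (1 - x0) ^ B)"
    using pos1 pos0 by (simp add: ln_mult ln_realpow)
  finally have "ln ((1 + e\<^sup>2) ^ (G + B)) \<le> ln ((1 + x1) ^ G * (1 - x0) ^ B)" .
  then show ?thesis
    using pos1 pos0 unfolding x1_def x0_def by (simp add: add_pos_nonneg)
qed

lemma choose_L:
  fixes c \<gamma> :: real
  assumes "c < \<gamma>"
  obtains L :: nat where "2 \<le> L" "c + 4 / real L \<le> \<gamma>"
proof -
  obtain n :: nat where n: "4 / (\<gamma> - c) < real n" using reals_Archimedean2 by blast
  define L where "L = max 2 n"
  have L2: "2 \<le> L" unfolding L_def by simp
  have "4 / (\<gamma> - c) < real L" using n unfolding L_def by linarith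
  then have "4 < real L * (\<gamma> - c)" using assms by (simp add: divide_less_eq mult.commute)
  then have "4 / real L \<le> \<gamma> - c" using L2 by (simp add: divide_le_eq mult.commute)
  then show ?thesis using that L2 by simp
qed

lemma ceil_facts:
  fixes c :: real and L :: nat
  assumes c: "0 \<le> c" "c \<le> 1" and L: "1 \<le> L"
  defines "j \<equiv> nat \<lceil>c * real L\<rceil>"
  shows "c * real L \<le> real j" "real j < c * real L + 1" "j \<le> L"
proof -
  have cl: "0 \<le> c * real L" using c by simp
  show "c * real L \<le> real j" unfolding j_def using cl by linarith
  show "real j < c * real L + 1" unfolding j_def using cl by linarith
  have "c * real L \<le> real L" using c by (simp add: mult_left_le_one_le)
  then have "\<lceil>c * real L\<rceil> \<le> int L" by (simp add: ceiling_le_iff)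
  then show "j \<le> L" unfolding j_def by linarith
qed

lemma core:
  fixes c \<gamma> :: real and L G B :: nat
  assumes c: "0 \<le> c" "c \<le> 1" and L: "2 \<le> L" and cg: "c + 4 / real L \<le> \<gamma>"
    and f: "\<gamma> * real (G + B) \<le> real G"
  defines "j \<equiv> nat \<lceil>c * real L\<rceil>"
  shows "(1 + (1 / real L)\<^sup>2) ^ (G + B)
     \<le> (real (L * L + L - j) / real (L * L)) ^ G * (real (L * L - j) / real (L * L)) ^ B"
proof -
  have L1: "1 \<le> L" using L by simp
  note cf = ceil_facts[OF c L1, folded j_def]
  define b where "b = real j / real L"
  define e where "e = 1 / real L"
  have Lpos: "0 < real L" using L by simp
  have b: "0 \<le> b" "b \<le> 1" unfolding b_def using cf(3) Lpos by (simp_all add: divide_le_eq)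
  have e: "0 < e" "e \<le> 1/2" unfolding e_def using L by (simp_all add: divide_le_eq)
  have bc: "b < c + e"
  proof -
    have "real j / real L < (c * real L + 1) / real L" using cf(2) Lpos by (rule divide_strict_right_mono)
    also have "(c * real L + 1) / real L = c + e" unfolding e_def using Lpos by (simp add: field_simps)
    finally show ?thesis unfolding b_def .
  qed
  have "(b + 3 * e) * real (G + B) \<le> \<gamma> * real (G + B)"
  proof (rule mult_right_mono)
    show "b + 3 * e \<le> \<gamma>" using bc cg unfolding e_def by simp
  qed simp
  with f have f': "(b + 3 * e) * real (G + B) \<le> real G" by linarith
  have "(1 + e\<^sup>2) ^ (G + B) \<le> (1 + e * (1 - b)) ^ G * (1 - e * b) ^ B"
    by (rule growth[OF b e f'])
  moreover have "1 + e * (1 - b) = real (L * L + L - j) / real (L * L)"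
  proof -
    have "real (L * L + L - j) = real L * real L + real L - real j" using cf(3) by (simp add: of_nat_diff)
    then show ?thesis unfolding e_def b_def using Lpos by (simp add: field_simps)
  qed
  moreover have "1 - e * b = real (L * L - j) / real (L * L)"
  proof -
    have "j \<le> L * L" using cf(3) L by (metis le_trans mult_le_mono2 mult_1_right L1)
    then have "real (L * L - j) = real L * real L - real j" by (simp add: of_nat_diff)
    then show ?thesis unfolding e_def b_def using Lpos by (simp add: field_simps)
  qed
  ultimately show ?thesis unfolding e_def by simp
qed

lemma cond_hi:
  fixes p c :: real and L :: nat
  assumes c: "0 \<le> c" "c \<le> 1" and L: "2 \<le> L" and p: "p \<le> c"
  defines "j \<equiv> nat \<lceil>c * real L\<rceil>"
  shows "p * (real (L * L + L - j) / real (L * L) - 1) + (1 - p) * (real (L * L - j) / real (L * L) - 1) \<le> 0"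
proof -
  have L1: "1 \<le> L" using L by simp
  note cf = ceil_facts[OF c L1, folded j_def]
  have Lpos: "0 < real L" using L by simp
  have jLL: "j \<le> L * L" using cf(3) L1 by (metis le_trans mult_le_mono2 mult_1_right)
  have e1: "real (L * L + L - j) = real L * real L + real L - real j" using cf(3) by (simp add: of_nat_diff)
  have e2: "real (L * L - j) = real L * real L - real j" using jLL by (simp add: of_nat_diff)
  have "p * (real (L * L + L - j) / real (L * L) - 1) + (1 - p) * (real (L * L - j) / real (L * L) - 1)
      = (p * real L - real j) / (real L * real L)"
    unfolding e1 e2 using Lpos by (simp add: field_simps)
  also have "\<dots> \<le> 0"
  proof -
    have "p * real L \<le> c * real L" using p Lpos by (simp add: mult_right_mono)
    then have "p * real L - real j \<le> 0" using cf(1) by linarith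
    then show ?thesis using Lpos by (simp add: divide_nonpos_pos)
  qed
  finally show ?thesis .
qed

lemma cond_lo:
  fixes p c :: real and L :: nat
  assumes c: "0 \<le> c" "c \<le> 1" and L: "2 \<le> L" and p: "1 - p \<le> c"
  defines "j \<equiv> nat \<lceil>c * real L\<rceil>"
  shows "p * (real (L * L - j) / real (L * L) - 1) + (1 - p) * (real (L * L + L - j) / real (L * L) - 1) \<le> 0"
  using cond_hi[OF c L p, folded j_def] by (simp add: algebra_simps)


lemma rel_freq_le1: "rel_freq S \<omega> n \<le> 1"
  unfolding rel_freq_N by (cases "N1 S (prefix \<omega> n) + N0 S (prefix \<omega> n) = 0") (auto simp: divide_le_eq)

lemma deviation:
  assumes I: "I \<in> interval_forecasts" and fl: "filterlim (sel_count S \<omega>) at_top sequentially"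
    and nok: "\<not> (ereal (Inf I) \<le> liminf (\<lambda>n. ereal (rel_freq S \<omega> n)) \<and> limsup (\<lambda>n. ereal (rel_freq S \<omega> n)) \<le> ereal (Sup I))"
  shows "\<exists>p1 p0 q (L::nat). 0 < q \<and> 2 \<le> L \<and>
           (\<forall>p\<in>I. p * (real p1 / real q - 1) + (1 - p) * (real p0 / real q - 1) \<le> 0) \<and>
           frequently (\<lambda>n. (1 + (1 / real L)\<^sup>2) ^ (N1 S (prefix \<omega> n) + N0 S (prefix \<omega> n))
                           \<le> betT S p1 p0 q (prefix \<omega> n)) sequentially"
proof -
  obtain a b where ab: "0 \<le> a" "a \<le> b" "b \<le> 1" "I = {a..b}" using I by (rule interval_forecastsE)
  have infI: "Inf I = a" and supI: "Sup I = b" using ab by simp_all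
  define G1 where "G1 n = N1 S (prefix \<omega> n)" for n
  define G0 where "G0 n = N0 S (prefix \<omega> n)" for n
  define X where "X n = rel_freq S \<omega> n" for n
  have X: "X n = real (G1 n) / real (G1 n + G0 n)" for n unfolding X_def G1_def G0_def by (rule rel_freq_N)
  have evN: "eventually (\<lambda>n. 0 < G1 n + G0 n) sequentially"
  proof -
    have "eventually (\<lambda>n. 1 \<le> sel_count S \<omega> n) sequentially"
      using fl unfolding filterlim_at_top by blast
    then show ?thesis
    proof (rule eventually_mono)
      fix n assume "1 \<le> sel_count S \<omega> n"
      then have "1 \<le> real (G1 n + G0 n)" unfolding sel_count_N G1_def G0_def .
      then show "0 < G1 n + G0 n" by (metis of_nat_0_less_iff less_le_trans zero_less_one)
    qed
  qed
  show ?thesis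
  proof (cases "limsup (\<lambda>n. ereal (X n)) \<le> ereal b")
    case False
    then obtain y where y: "ereal b < y" "\<not> eventually (\<lambda>n. ereal (X n) < y) sequentially"
      unfolding Limsup_le_iff by auto
    obtain \<beta> where \<beta>: "b < \<beta>" "ereal \<beta> \<le> y"
    proof (cases y)
      case (real r) then show ?thesis using that y by auto
    next
      case PInf then show ?thesis using that[of "b + 1"] by simp
    next
      case MInf then show ?thesis using y by simp
    qed
    have fr: "frequently (\<lambda>n. \<beta> \<le> X n) sequentially"
    proof -
      have "frequently (\<lambda>n. \<not> ereal (X n) < y) sequentially" using y(2) by (simp add: not_eventually)
      then show ?thesis by (rule frequently_elim1) (use \<beta>(2) in \<open>metis not_less ereal_less_eq(3) order.trans\<close>)
    qed
    obtain L :: nat where L: "2 \<le> L" "b + 4 / real L \<le> \<beta>" using choose_L[OF \<beta>(1)] by blast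
    define j where "j = nat \<lceil>b * real L\<rceil>"
    have b01: "0 \<le> b" "b \<le> 1" using ab by simp_all
    show ?thesis
    proof (intro exI conjI)
      show "0 < L * L" using L by simp
      show "2 \<le> L" by (rule L(1))
      show "\<forall>p\<in>I. p * (real (L * L + L - j) / real (L * L) - 1) + (1 - p) * (real (L * L - j) / real (L * L) - 1) \<le> 0"
      proof
        fix p assume "p \<in> I"
        then have "p \<le> b" using ab by simp
        then show "p * (real (L * L + L - j) / real (L * L) - 1) + (1 - p) * (real (L * L - j) / real (L * L) - 1) \<le> 0"
          unfolding j_def by (rule cond_hi[OF b01 L(1)])
      qed
      show "frequently (\<lambda>n. (1 + (1 / real L)\<^sup>2) ^ (N1 S (prefix \<omega> n) + N0 S (prefix \<omega> n))
                           \<le> betT S (L * L + L - j) (L * L - j) (L * L) (prefix \<omega> n)) sequentially"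
        using frequently_eventually_frequently[OF fr evN]
      proof (rule frequently_elim1)
        fix n assume n: "\<beta> \<le> X n \<and> 0 < G1 n + G0 n"
        have pos: "0 < real (G1 n + G0 n)" using n by (simp only: of_nat_0_less_iff)
        have "\<beta> \<le> real (G1 n) / real (G1 n + G0 n)" using n X by metis
        then have "\<beta> * real (G1 n + G0 n) \<le> real (G1 n)" by (simp only: pos_le_divide_eq[OF pos])
        from core[OF b01 L this, folded j_def]
        show "(1 + (1 / real L)\<^sup>2) ^ (N1 S (prefix \<omega> n) + N0 S (prefix \<omega> n))
                           \<le> betT S (L * L + L - j) (L * L - j) (L * L) (prefix \<omega> n)"
          unfolding betT_def G1_def G0_def .
      qed
    qed
  next
    case True
    with nok have False': "\<not> ereal a \<le> liminf (\<lambda>n. ereal (X n))" unfolding infI supI X_def by blast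
    then obtain y where y: "y < ereal a" "\<not> eventually (\<lambda>n. y < ereal (X n)) sequentially"
      unfolding le_Liminf_iff by auto
    obtain \<alpha> where \<alpha>: "\<alpha> < a" "y \<le> ereal \<alpha>"
    proof (cases y)
      case (real r) then show ?thesis using that y by auto
    next
      case MInf then show ?thesis using that[of "a - 1"] by simp
    next
      case PInf then show ?thesis using y by simp
    qed
    have fr: "frequently (\<lambda>n. X n \<le> \<alpha>) sequentially"
    proof -
      have "frequently (\<lambda>n. \<not> y < ereal (X n)) sequentially" using y(2) by (simp add: not_eventually)
      then show ?thesis by (rule frequently_elim1) (use \<alpha>(2) in \<open>metis not_less ereal_less_eq(3) order.trans\<close>)
    qed
    define c where "c = 1 - a"
    have c01: "0 \<le> c" "c \<le> 1" unfolding c_def using ab by simp_all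
    have cg: "c < 1 - \<alpha>" unfolding c_def using \<alpha> by simp
    obtain L :: nat where L: "2 \<le> L" "c + 4 / real L \<le> 1 - \<alpha>" using choose_L[OF cg] by blast
    define j where "j = nat \<lceil>c * real L\<rceil>"
    show ?thesis
    proof (intro exI conjI)
      show "0 < L * L" using L by simp
      show "2 \<le> L" by (rule L(1))
      show "\<forall>p\<in>I. p * (real (L * L - j) / real (L * L) - 1) + (1 - p) * (real (L * L + L - j) / real (L * L) - 1) \<le> 0"
      proof
        fix p assume "p \<in> I"
        then have "1 - p \<le> c" using ab unfolding c_def by simp
        then show "p * (real (L * L - j) / real (L * L) - 1) + (1 - p) * (real (L * L + L - j) / real (L * L) - 1) \<le> 0"
          unfolding j_def by (rule cond_lo[OF c01 L(1)])
      qed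
      show "frequently (\<lambda>n. (1 + (1 / real L)\<^sup>2) ^ (N1 S (prefix \<omega> n) + N0 S (prefix \<omega> n))
                           \<le> betT S (L * L - j) (L * L + L - j) (L * L) (prefix \<omega> n)) sequentially"
        using frequently_eventually_frequently[OF fr evN]
      proof (rule frequently_elim1)
        fix n assume n: "X n \<le> \<alpha> \<and> 0 < G1 n + G0 n"
        have pos: "0 < real (G1 n + G0 n)" using n by (simp only: of_nat_0_less_iff)
        have "real (G1 n) / real (G1 n + G0 n) \<le> \<alpha>" using n X by metis
        then have "real (G1 n) \<le> \<alpha> * real (G1 n + G0 n)" by (simp only: pos_divide_le_eq[OF pos])
        then have "(1 - \<alpha>) * real (G0 n + G1 n) \<le> real (G0 n)" by (simp add: algebra_simps)
        from core[OF c01 L this, folded j_def]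
        show "(1 + (1 / real L)\<^sup>2) ^ (N1 S (prefix \<omega> n) + N0 S (prefix \<omega> n))
                           \<le> betT S (L * L - j) (L * L + L - j) (L * L) (prefix \<omega> n)"
          unfolding betT_def G1_def G0_def by (simp add: add.commute mult.commute)
      qed
    qed
  qed
qed

lemma frequently_le_limsup:
  assumes "frequently (\<lambda>n. c \<le> f n) sequentially"
  shows "ereal c \<le> limsup (\<lambda>n. ereal (f n))"
proof (rule ccontr)
  assume "\<not> ereal c \<le> limsup (\<lambda>n. ereal (f n))"
  then have "limsup (\<lambda>n. ereal (f n)) < ereal c" by simp
  then have ev: "eventually (\<lambda>n. ereal (f n) < ereal c) sequentially" by (rule Limsup_lessD)
  have "frequently (\<lambda>n. c \<le> f n \<and> ereal (f n) < ereal c) sequentially"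
    by (rule frequently_eventually_frequently[OF assms ev])
  then have "frequently (\<lambda>n. False) sequentially" by (rule frequently_elim1) auto
  then show False by simp
qed

lemma sel_count_N':
  "sel_count S \<omega> n = real (N1 S (prefix \<omega> n) + N0 S (prefix \<omega> n))"
  by (rule sel_count_N)

lemma ev_large:
  assumes fl: "filterlim (sel_count S \<omega>) at_top sequentially" and x: "0 < x"
  shows "eventually (\<lambda>n. B < 1 + real (N1 S (prefix \<omega> n) + N0 S (prefix \<omega> n)) * x) sequentially"
proof -
  have "eventually (\<lambda>n. B / x \<le> sel_count S \<omega> n) sequentially"
    using fl unfolding filterlim_at_top by blast
  then show ?thesis
  proof (rule eventually_mono)
    fix n assume "B / x \<le> sel_count S \<omega> n"
    then have "B \<le> sel_count S \<omega> n * x" using x by (simp add: divide_le_eq)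
    then show "B < 1 + real (N1 S (prefix \<omega> n) + N0 S (prefix \<omega> n)) * x"
      unfolding sel_count_N by linarith
  qed
qed

lemma C_imp_CH:
  assumes I: "I \<in> interval_forecasts" and C: "C_random \<omega> I"
  shows "CH_random \<omega> I"
  unfolding CH_random_def freq_ok_def
proof (intro allI impI, rule ccontr)
  fix S assume S: "recursive_sel S" and fl: "filterlim (sel_count S \<omega>) at_top sequentially"
    and nok: "\<not> (ereal (Inf I) \<le> liminf (\<lambda>n. ereal (rel_freq S \<omega> n)) \<and> limsup (\<lambda>n. ereal (rel_freq S \<omega> n)) \<le> ereal (Sup I))"
  obtain p1 p0 q and L :: nat where q: "0 < q" and L: "2 \<le> L"
    and cond: "\<forall>p\<in>I. p * (real p1 / real q - 1) + (1 - p) * (real p0 / real q - 1) \<le> 0"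
    and fr: "frequently (\<lambda>n. (1 + (1 / real L)\<^sup>2) ^ (N1 S (prefix \<omega> n) + N0 S (prefix \<omega> n))
                           \<le> betT S p1 p0 q (prefix \<omega> n)) sequentially"
    using deviation[OF I fl nok] by blast
  define x where "x = (1 / real L)\<^sup>2"
  have x: "0 < x" unfolding x_def using L by simp
  have "\<forall>B. frequently (\<lambda>n. B < betT S p1 p0 q (prefix \<omega> n)) sequentially"
  proof
    fix B
    have "frequently (\<lambda>n. (1 + x) ^ (N1 S (prefix \<omega> n) + N0 S (prefix \<omega> n)) \<le> betT S p1 p0 q (prefix \<omega> n)
             \<and> B < 1 + real (N1 S (prefix \<omega> n) + N0 S (prefix \<omega> n)) * x) sequentially"
      using frequently_eventually_frequently[OF fr ev_large[OF fl x]] unfolding x_def .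
    then show "frequently (\<lambda>n. B < betT S p1 p0 q (prefix \<omega> n)) sequentially"
    proof (rule frequently_elim1)
      fix n
      assume h: "(1 + x) ^ (N1 S (prefix \<omega> n) + N0 S (prefix \<omega> n)) \<le> betT S p1 p0 q (prefix \<omega> n)
             \<and> B < 1 + real (N1 S (prefix \<omega> n) + N0 S (prefix \<omega> n)) * x"
      have "1 + real (N1 S (prefix \<omega> n) + N0 S (prefix \<omega> n)) * x \<le> (1 + x) ^ (N1 S (prefix \<omega> n) + N0 S (prefix \<omega> n))"
        by (rule Bernoulli_inequality) (use x in simp)
      with h show "B < betT S p1 p0 q (prefix \<omega> n)" by linarith
    qed
  qed
  then have "limsup (\<lambda>n. ereal (betT S p1 p0 q (prefix \<omega> n))) = \<infinity>"
    by (rule limsup_infty_iff[THEN iffD2])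
  moreover have "test_supermartingale I (betT S p1 p0 q)" by (rule betT_test[OF I cond])
  moreover have "computable_real enc_sit (betT S p1 p0 q)" by (rule betT_comp[OF S q])
  ultimately show False using C unfolding C_random_def by blast
qed


lemma tau_comp:
  assumes S: "recursive_sel S" and LL: "0 < LL"
  shows "computable_real id (\<lambda>n. (1 + 1 / real LL) ^ (\<Sum>k<n. if S (replicate k False) then 1 else (0::nat)) - 1)"
proof -
  from S obtain g where g: "recursive1 g" and gS: "\<And>s. g (enc_sit s) = (if S s then 1 else 0)"
    unfolding recursive_sel_def by blast
  define M where "M n = (\<Sum>k<n. if g (2 ^ k - 1) = 1 then 1 else (0::nat))" for n
  define code where "code n m = prod_encode (2 * ((LL + 1) ^ M n - LL ^ M n), LL ^ M n - 1)" for n m :: nat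
  have rec: "recursive2 code"
  proof (rule rfn_recursive2)
    note gr = rfn_app1[OF g]
    show "rfn 2 (\<lambda>xs. code (xs ! 0) (xs ! 1))"
      unfolding code_def M_def
      by (intro rfn_prod_encode rfn_mult rfn_minus rfn_pow rfn_add rfn_sum rpred_if rpred_eq
          gr rfn_proj' rfn_proj_drop rfn_const'; simp)
  qed
  have M: "M n = (\<Sum>k<n. if S (replicate k False) then 1 else (0::nat))" for n
  proof -
    have gk: "g (2 ^ k - 1) = (if S (replicate k False) then 1 else 0)" for k
      using gS[of "replicate k False"] unfolding replicate_enc .
    show ?thesis unfolding M_def gk by (rule sum.cong[OF refl]) simp
  qed
  have val: "rat_dec (code n m) = (1 + 1 / real LL) ^ M n - 1" for n m
  proof -
    have le: "LL ^ M n \<le> (LL + 1) ^ M n" by (rule power_mono) simp_all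
    have "rat_dec (code n m) = real ((LL + 1) ^ M n - LL ^ M n) / real (LL ^ M n)"
      unfolding code_def using LL by (subst rat_dec_code) simp_all
    also have "\<dots> = ((real LL + 1) ^ M n - real LL ^ M n) / real LL ^ M n"
      using le by (simp add: of_nat_diff add.commute)
    also have "\<dots> = (1 + 1 / real LL) ^ M n - 1"
      using LL by (simp add: diff_divide_distrib power_divide[symmetric] add_divide_distrib)
    finally show ?thesis .
  qed
  show ?thesis unfolding computable_real_def
    by (intro exI[of _ code] conjI rec allI) (simp add: val M)
qed

lemma S_imp_wCH:
  assumes I: "I \<in> interval_forecasts" and Sr: "S_random \<omega> I"
  shows "wCH_random \<omega> I"
  unfolding wCH_random_def freq_ok_def
proof (intro allI impI, rule ccontr, elim conjE)
  fix S assume S: "recursive_sel S" and tmp: "temporal S" and fl: "filterlim (sel_count S \<omega>) at_top sequentially"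
    and nok: "\<not> (ereal (Inf I) \<le> liminf (\<lambda>n. ereal (rel_freq S \<omega> n)) \<and> limsup (\<lambda>n. ereal (rel_freq S \<omega> n)) \<le> ereal (Sup I))"
  obtain p1 p0 q and L :: nat where q: "0 < q" and L: "2 \<le> L"
    and cond: "\<forall>p\<in>I. p * (real p1 / real q - 1) + (1 - p) * (real p0 / real q - 1) \<le> 0"
    and fr: "frequently (\<lambda>n. (1 + (1 / real L)\<^sup>2) ^ (N1 S (prefix \<omega> n) + N0 S (prefix \<omega> n))
                           \<le> betT S p1 p0 q (prefix \<omega> n)) sequentially"
    using deviation[OF I fl nok] by blast
  define x where "x = (1 / real L)\<^sup>2"
  have x: "0 < x" unfolding x_def using L by simp
  have xLL: "x = 1 / real (L * L)" unfolding x_def by (simp add: power2_eq_square)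
  define NN where "NN n = N1 S (prefix \<omega> n) + N0 S (prefix \<omega> n)" for n
  have NN: "NN n = (\<Sum>k<n. if S (replicate k False) then 1 else (0::nat))" for n
  proof -
    have "NN n = (\<Sum>k<n. if S (prefix \<omega> k) then 1 else (0::nat))"
      unfolding NN_def N1_prefix N0_prefix sum.distrib[symmetric] by (rule sum.cong) auto
    also have "\<dots> = (\<Sum>k<n. if S (replicate k False) then 1 else (0::nat))"
      using tmp unfolding temporal_def by (intro sum.cong refl) (metis length_prefix length_replicate)
    finally show ?thesis .
  qed
  define \<tau> where "\<tau> n = (1 + x) ^ NN n - 1" for n
  have tau_c: "computable_real id \<tau>"
  proof -
    have "computable_real id (\<lambda>n. (1 + 1 / real (L * L)) ^ (\<Sum>k<n. if S (replicate k False) then 1 else (0::nat)) - 1)"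
      by (rule tau_comp[OF S]) (use L in simp)
    moreover have "(\<lambda>n. (1 + 1 / real (L * L)) ^ (\<Sum>k<n. if S (replicate k False) then 1 else (0::nat)) - 1) = \<tau>"
      unfolding \<tau>_def NN xLL ..
    ultimately show ?thesis by simp
  qed
  have tau_nn: "0 \<le> \<tau> n" for n unfolding \<tau>_def using x by simp
  have NN_mono: "NN m \<le> NN n" if "m \<le> n" for m n
    unfolding NN using that by (intro sum_mono2) auto
  have tau_mono: "mono \<tau>"
    unfolding mono_def \<tau>_def using x NN_mono by (auto intro!: power_increasing)
  have bern: "1 + real (NN n) * x \<le> (1 + x) ^ NN n" for n
    by (rule Bernoulli_inequality) (use x in simp)
  have tau_unb: "\<not> bdd_above (range \<tau>)"
  proof
    assume "bdd_above (range \<tau>)"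
    then obtain B where B: "\<And>n. \<tau> n \<le> B" unfolding bdd_above_def by auto
    obtain n where "B + 1 < 1 + real (NN n) * x"
      using eventually_happens'[OF sequentially_bot ev_large[OF fl x, of "B + 1"]] unfolding NN_def by blast
    with B[of n] bern[of n] show False unfolding \<tau>_def by linarith
  qed
  have ls: "0 \<le> limsup (\<lambda>n. ereal (betT S p1 p0 q (prefix \<omega> n) - \<tau> n))"
  proof -
    have "frequently (\<lambda>n. 1 \<le> betT S p1 p0 q (prefix \<omega> n) - \<tau> n) sequentially"
      using fr by (rule frequently_elim1) (simp add: \<tau>_def x_def NN_def)
    then have "ereal 1 \<le> limsup (\<lambda>n. ereal (betT S p1 p0 q (prefix \<omega> n) - \<tau> n))"
      by (rule frequently_le_limsup)
    then show ?thesis by (rule order.trans[rotated]) simp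
  qed
  have "test_supermartingale I (betT S p1 p0 q)" by (rule betT_test[OF I cond])
  moreover have "computable_real enc_sit (betT S p1 p0 q)" by (rule betT_comp[OF S q])
  moreover have "\<forall>n. 0 \<le> \<tau> n" using tau_nn by blast
  moreover from Sr have "\<not> (test_supermartingale I (betT S p1 p0 q) \<and> computable_real enc_sit (betT S p1 p0 q)
       \<and> computable_real id \<tau> \<and> (\<forall>n. 0 \<le> \<tau> n) \<and> mono \<tau> \<and> \<not> bdd_above (range \<tau>)
       \<and> limsup (\<lambda>n. ereal (betT S p1 p0 q (prefix \<omega> n) - \<tau> n)) \<ge> 0)"
    unfolding S_random_def
    by (intro notI) (erule notE, rule exI[of _ "betT S p1 p0 q"], rule exI[of _ \<tau>], assumption)
  ultimately show False using tau_c tau_mono tau_unb ls by blast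
qed

theorem corollary1:
  fixes \<omega> :: "nat \<Rightarrow> bool"
  shows "I_of wCH_random \<omega> \<subseteq> I_of CH_random \<omega> \<and> I_of CH_random \<omega> \<subseteq> I_of C_random \<omega>
    \<and> I_of wCH_random \<omega> \<subseteq> I_of S_random \<omega> \<and> I_of S_random \<omega> \<subseteq> I_of C_random \<omega>
    \<and> I_of C_random \<omega> \<subseteq> I_of weak_MartinLoef_random \<omega> \<and> I_of weak_MartinLoef_random \<omega> \<subseteq> I_of MartinLoef_random \<omega>"
proof (intro conjI)
  show "I_of wCH_random \<omega> \<subseteq> I_of CH_random \<omega>" by (rule I_of_mono) (rule CH_imp_wCH)
  show "I_of CH_random \<omega> \<subseteq> I_of C_random \<omega>" by (rule I_of_mono) (rule C_imp_CH)
  show "I_of wCH_random \<omega> \<subseteq> I_of S_random \<omega>" by (rule I_of_mono) (rule S_imp_wCH)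
  show "I_of S_random \<omega> \<subseteq> I_of C_random \<omega>" by (rule I_of_mono) (rule C_imp_S)
  show "I_of C_random \<omega> \<subseteq> I_of weak_MartinLoef_random \<omega>" by (rule I_of_mono) (rule wML_imp_C)
  show "I_of weak_MartinLoef_random \<omega> \<subseteq> I_of MartinLoef_random \<omega>" by (rule I_of_mono) (rule MartinLoef_imp_wML)
qed

end
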